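(* Let $\mathcal{H}_A,\mathcal{H}_B$ be separable Hilbert spaces. A sequence $\{\Phi_n\}_{n\geq1}$ of quantum operations from $\mathfrak{T}(\mathcal{H}_A)$ to $\mathfrak{T}(\mathcal{H}_B)$ strongly converges to a quantum operation $\Phi_0$ if and only if there exist a separable Hilbert space $\mathcal{H}_C$ and a sequence $\{\widetilde{\Phi}_n\}_{n\geq1}$ of quantum channels from $\mathfrak{T}(\mathcal{H}_A)$ to $\mathfrak{T}(\mathcal{H}_B\oplus\mathcal{H}_C)$ strongly converging to a quantum channel $\widetilde{\Phi}_0$ such that $$\Phi_n(\rho)=P_B\widetilde{\Phi}_n(\rho)P_B\quad\forall\rho\in\mathfrak{T}(\mathcal{H}_A),\ \forall n\geq0,$$ where $P_B$ is the projector onto the subspace $\mathcal{H}_B$ of $\mathcal{H}_B\oplus\mathcal{H}_C$.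
   Context: $\mathfrak{T}(\mathcal{H})$ is the Banach space of trace-class operators with the trace norm and $\mathfrak{S}(\mathcal{H})$ the set of density operators. A quantum operation is a completely positive trace-non-increasing linear map between trace-class spaces; a quantum channel is a trace-preserving quantum operation. A sequence $\{\Phi_n\}$ of quantum operations strongly converges to $\Phi_0$ if $\Phi_n(\rho)\to\Phi_0(\rho)$ in trace norm for every density operator $\rho$ on the input space. *)

theory Defs
  imports "HOL-Analysis.Analysis"
begin

text \<open>
Separable Hilbert spaces are modelled concretely as l2(S) for a countable index set S:
vectors are functions S -> complex (zero outside S) with square-summable modulus.
Bounded operators are represented by their matrices with respect to the canonical
orthonormal basis, i.e. functions  'a => 'a => complex  vanishing outside S x S.
\<close>

definition l2 :: "'a set \<Rightarrow> ('a \<Rightarrow> complex) set" where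
  "l2 S = {x. (\<forall>i. i \<notin> S \<longrightarrow> x i = 0) \<and> (\<lambda>i. (cmod (x i))^2) summable_on S}"

definition l2norm :: "'a set \<Rightarrow> ('a \<Rightarrow> complex) \<Rightarrow> real" where
  "l2norm S x = sqrt (infsum (\<lambda>i. (cmod (x i))^2) S)"

definition nuclear_rep :: "'a set \<Rightarrow> (nat \<Rightarrow> 'a \<Rightarrow> complex) \<Rightarrow> (nat \<Rightarrow> 'a \<Rightarrow> complex) \<Rightarrow> bool" where
  "nuclear_rep S x y \<longleftrightarrow> (\<forall>k. x k \<in> l2 S \<and> y k \<in> l2 S)
      \<and> summable (\<lambda>k. l2norm S (x k) * l2norm S (y k))"

definition rep_op :: "(nat \<Rightarrow> 'a \<Rightarrow> complex) \<Rightarrow> (nat \<Rightarrow> 'a \<Rightarrow> complex) \<Rightarrow> ('a \<Rightarrow> 'a \<Rightarrow> complex)" where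
  "rep_op x y = (\<lambda>i j. \<Sum>k. x k i * cnj (y k j))"

definition trace_class :: "'a set \<Rightarrow> ('a \<Rightarrow> 'a \<Rightarrow> complex) set" where
  "trace_class S = {M. \<exists>x y. nuclear_rep S x y \<and> M = rep_op x y}"

definition trace_norm :: "'a set \<Rightarrow> ('a \<Rightarrow> 'a \<Rightarrow> complex) \<Rightarrow> real" where
  "trace_norm S M = Inf {(\<Sum>k. l2norm S (x k) * l2norm S (y k)) | x y. nuclear_rep S x y \<and> M = rep_op x y}"

definition trace :: "'a set \<Rightarrow> ('a \<Rightarrow> 'a \<Rightarrow> complex) \<Rightarrow> complex" where
  "trace S M = infsum (\<lambda>i. M i i) S"

definition qform :: "'a set \<Rightarrow> ('a \<Rightarrow> 'a \<Rightarrow> complex) \<Rightarrow> ('a \<Rightarrow> complex) \<Rightarrow> complex" where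
  "qform S M v = infsum (\<lambda>i. cnj (v i) * infsum (\<lambda>j. M i j * v j) S) S"

definition positive_tc :: "'a set \<Rightarrow> ('a \<Rightarrow> 'a \<Rightarrow> complex) \<Rightarrow> bool" where
  "positive_tc S M \<longleftrightarrow> M \<in> trace_class S \<and>
     (\<forall>v \<in> l2 S. Im (qform S M v) = 0 \<and> Re (qform S M v) \<ge> 0)"

definition density_ops :: "'a set \<Rightarrow> ('a \<Rightarrow> 'a \<Rightarrow> complex) set" where
  "density_ops S = {M. positive_tc S M \<and> trace S M = 1}"

text \<open>Ampliation id_n (x) Phi acting on block operators on l2(S x {..<n}).\<close>
definition ampl :: "nat \<Rightarrow> (('a \<Rightarrow> 'a \<Rightarrow> complex) \<Rightarrow> ('b \<Rightarrow> 'b \<Rightarrow> complex))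
     \<Rightarrow> (('a \<times> nat) \<Rightarrow> ('a \<times> nat) \<Rightarrow> complex) \<Rightarrow> (('b \<times> nat) \<Rightarrow> ('b \<times> nat) \<Rightarrow> complex)" where
  "ampl n \<Phi> W = (\<lambda>(i, k) (j, l). if k < n \<and> l < n
       then \<Phi> (\<lambda>i' j'. W (i', k) (j', l)) i j else 0)"

definition quantum_operation :: "'a set \<Rightarrow> 'b set \<Rightarrow> (('a \<Rightarrow> 'a \<Rightarrow> complex) \<Rightarrow> ('b \<Rightarrow> 'b \<Rightarrow> complex)) \<Rightarrow> bool" where
  "quantum_operation A B \<Phi> \<longleftrightarrow>
     (\<forall>M \<in> trace_class A. \<Phi> M \<in> trace_class B)
   \<and> (\<forall>M \<in> trace_class A. \<forall>N \<in> trace_class A. \<Phi> (\<lambda>i j. M i j + N i j) = (\<lambda>i j. \<Phi> M i j + \<Phi> N i j))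
   \<and> (\<forall>M \<in> trace_class A. \<forall>c::complex. \<Phi> (\<lambda>i j. c * M i j) = (\<lambda>i j. c * \<Phi> M i j))
   \<and> (\<forall>n. \<forall>W. positive_tc (A \<times> {..<n}) W \<longrightarrow> positive_tc (B \<times> {..<n}) (ampl n \<Phi> W))
   \<and> (\<forall>M. positive_tc A M \<longrightarrow> Re (trace B (\<Phi> M)) \<le> Re (trace A M))"

definition quantum_channel :: "'a set \<Rightarrow> 'b set \<Rightarrow> (('a \<Rightarrow> 'a \<Rightarrow> complex) \<Rightarrow> ('b \<Rightarrow> 'b \<Rightarrow> complex)) \<Rightarrow> bool" where
  "quantum_channel A B \<Phi> \<longleftrightarrow> quantum_operation A B \<Phi>
     \<and> (\<forall>M \<in> trace_class A. trace B (\<Phi> M) = trace A M)"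

definition strongly_converges :: "'a set \<Rightarrow> 'b set \<Rightarrow> (nat \<Rightarrow> ('a \<Rightarrow> 'a \<Rightarrow> complex) \<Rightarrow> ('b \<Rightarrow> 'b \<Rightarrow> complex))
     \<Rightarrow> (('a \<Rightarrow> 'a \<Rightarrow> complex) \<Rightarrow> ('b \<Rightarrow> 'b \<Rightarrow> complex)) \<Rightarrow> bool" where
  "strongly_converges A B \<Phi>s \<Phi>0 \<longleftrightarrow>
     (\<forall>\<rho> \<in> density_ops A. (\<lambda>n. trace_norm B (\<lambda>i j. \<Phi>s n \<rho> i j - \<Phi>0 \<rho> i j)) \<longlonglongrightarrow> 0)"

end

theory Submission
  imports Defs
begin


lemma l2_zero: "x \<in> l2 S \<Longrightarrow> i \<notin> S \<Longrightarrow> x i = 0"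
  by (simp add: l2_def)

lemma l2_summ: "x \<in> l2 S \<Longrightarrow> (\<lambda>i. (cmod (x i))^2) summable_on S"
  by (simp add: l2_def)

lemma l2I: "(\<And>i. i \<notin> S \<Longrightarrow> x i = 0) \<Longrightarrow> (\<lambda>i. (cmod (x i))^2) summable_on S \<Longrightarrow> x \<in> l2 S"
  by (simp add: l2_def)

lemma l2norm_nonneg: "l2norm S x \<ge> 0"
  unfolding l2norm_def by (simp add: infsum_nonneg)

lemma l2norm_sq: "(l2norm S x)^2 = infsum (\<lambda>i. (cmod (x i))^2) S"
  unfolding l2norm_def by (simp add: infsum_nonneg)

lemma l2_coord_le: assumes "x \<in> l2 S" shows "cmod (x i) \<le> l2norm S x"
proof (cases "i \<in> S")
  case True
  have "(cmod (x i))^2 = sum (\<lambda>i. (cmod (x i))^2) {i}" by simp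
  also have "\<dots> \<le> infsum (\<lambda>i. (cmod (x i))^2) S"
    by (rule finite_sum_le_infsum) (use True l2_summ[OF assms] in auto)
  finally show ?thesis unfolding l2norm_def by (simp add: real_le_rsqrt)
next
  case False then show ?thesis using assms by (simp add: l2_zero l2norm_nonneg)
qed

lemma CS_summable: assumes "u \<in> l2 S" "v \<in> l2 S"
  shows "(\<lambda>i. cmod (u i) * cmod (v i)) summable_on S"
proof -
  have "(\<lambda>i. (1/2) * ((cmod (u i))^2 + (cmod (v i))^2)) summable_on S"
    using summable_on_add[OF l2_summ[OF assms(1)] l2_summ[OF assms(2)]]
    by (rule summable_on_cmult_right)
  then show ?thesis
  proof (rule summable_on_comparison_test)
    fix i
    have "0 \<le> (cmod (u i) - cmod (v i))^2" by simp
    then show "cmod (u i) * cmod (v i) \<le> (1/2) * ((cmod (u i))^2 + (cmod (v i))^2)"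
      by (simp add: power2_eq_square algebra_simps)
  qed simp
qed

lemma CS_le: assumes "u \<in> l2 S" "v \<in> l2 S"
  shows "infsum (\<lambda>i. cmod (u i) * cmod (v i)) S \<le> l2norm S u * l2norm S v"
proof (rule infsum_le_finite_sums[OF CS_summable[OF assms]])
  fix F assume F: "finite F" "F \<subseteq> S"
  have "(\<Sum>i\<in>F. cmod (u i) * cmod (v i)) = (\<Sum>i\<in>F. \<bar>cmod (u i)\<bar> * \<bar>cmod (v i)\<bar>)" by simp
  also have "\<dots> \<le> L2_set (\<lambda>i. cmod (u i)) F * L2_set (\<lambda>i. cmod (v i)) F"
    by (rule L2_set_mult_ineq)
  also have "\<dots> \<le> l2norm S u * l2norm S v"
  proof (rule mult_mono)
    show "L2_set (\<lambda>i. cmod (u i)) F \<le> l2norm S u"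
      unfolding L2_set_def l2norm_def
      by (rule real_sqrt_le_mono, rule finite_sum_le_infsum) (use F l2_summ[OF assms(1)] in auto)
    show "L2_set (\<lambda>i. cmod (v i)) F \<le> l2norm S v"
      unfolding L2_set_def l2norm_def
      by (rule real_sqrt_le_mono, rule finite_sum_le_infsum) (use F l2_summ[OF assms(2)] in auto)
  qed (auto simp: l2norm_nonneg L2_set_def sum_nonneg)
  finally show "(\<Sum>i\<in>F. cmod (u i) * cmod (v i)) \<le> l2norm S u * l2norm S v" .
qed

lemma CS_abs: assumes "u \<in> l2 S" "v \<in> l2 S"
  shows "(\<lambda>i. cnj (u i) * v i) summable_on S"
    and "cmod (infsum (\<lambda>i. cnj (u i) * v i) S) \<le> l2norm S u * l2norm S v"
proof -
  have ab: "(\<lambda>i. norm (cnj (u i) * v i)) summable_on S"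
    using CS_summable[OF assms] by (simp add: norm_mult)
  then show "(\<lambda>i. cnj (u i) * v i) summable_on S" by (rule abs_summable_summable)
  have "cmod (infsum (\<lambda>i. cnj (u i) * v i) S) \<le> infsum (\<lambda>i. cmod (cnj (u i) * v i)) S"
    using ab by (rule norm_infsum_bound)
  also have "\<dots> \<le> l2norm S u * l2norm S v" using CS_le[OF assms] by (simp add: norm_mult)
  finally show "cmod (infsum (\<lambda>i. cnj (u i) * v i) S) \<le> l2norm S u * l2norm S v" .
qed



lemma nat_infsum_suminf:
  fixes g :: "nat \<Rightarrow> 'b::banach"
  assumes "summable (\<lambda>k. norm (g k))"
  shows "g summable_on UNIV" "infsum g UNIV = (\<Sum>k. g k)"
proof -
  have "g sums (\<Sum>k. g k)" using summable_norm_cancel[OF assms] by (simp add: summable_sums)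
  then have "(g has_sum (\<Sum>k. g k)) UNIV" by (rule norm_summable_imp_has_sum[OF assms])
  then show "g summable_on UNIV" "infsum g UNIV = (\<Sum>k. g k)"
    by (auto simp: has_sum_iff)
qed

lemma fubini_G:
  fixes f :: "nat \<Rightarrow> 'a \<Rightarrow> complex"
  assumes s1: "\<And>k. (\<lambda>i. norm (f k i)) summable_on S"
    and s2: "summable (\<lambda>k. infsum (\<lambda>i. norm (f k i)) S)"
  shows "(\<lambda>i. \<Sum>k. f k i) summable_on S"
    and "infsum (\<lambda>i. \<Sum>k. f k i) S = (\<Sum>k. infsum (f k) S)"
    and "\<And>i. i \<in> S \<Longrightarrow> summable (\<lambda>k. norm (f k i))"
proof -
  define F where "F = (\<lambda>(k,i). f k i)"
  have nn: "\<And>k. infsum (\<lambda>i. norm (f k i)) S \<ge> 0" by (simp add: infsum_nonneg)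
  have "(\<lambda>k. infsum (\<lambda>i. norm (f k i)) S) summable_on UNIV"
    using s2 nn by (intro norm_summable_imp_summable_on) simp
  then have absF: "(\<lambda>x. norm (F x)) summable_on (UNIV \<times> S)"
    unfolding Infinite_Sum.abs_summable_on_Sigma_iff[where f=F and A=UNIV and B="\<lambda>_. S"]
    using s1 nn unfolding F_def by (simp only: prod.case real_norm_def abs_of_nonneg) simp
  have absG: "(\<lambda>(i,k). norm (f k i)) summable_on (S \<times> UNIV)"
    using absF summable_on_swap[of "\<lambda>x. norm (F x)" UNIV S] by (simp add: F_def case_prod_unfold)
  then have absG': "(\<lambda>x. norm ((\<lambda>(i,k). f k i) x)) summable_on (S \<times> UNIV)"
    by (simp add: case_prod_unfold)
  have "\<forall>i\<in>S. (\<lambda>k. norm (f k i)) summable_on UNIV"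
    using absG'[unfolded Infinite_Sum.abs_summable_on_Sigma_iff[where f="\<lambda>(i,k). f k i" and A=S and B="\<lambda>_. UNIV"]]
    by simp
  then show sk: "\<And>i. i \<in> S \<Longrightarrow> summable (\<lambda>k. norm (f k i))"
    by (simp add: summable_on_imp_summable)
  have eqi: "infsum (\<lambda>k. f k i) UNIV = (\<Sum>k. f k i)" if "i \<in> S" for i
    using nat_infsum_suminf(2)[OF sk[OF that]] .
  have sumG: "(\<lambda>(i,k). f k i) summable_on (S \<times> UNIV)"
    by (rule abs_summable_summable[OF absG'])
  have "(\<lambda>i. infsum (\<lambda>k. f k i) UNIV) summable_on S"
    using summable_on_Sigma_banach[OF sumG] by simp
  then show "(\<lambda>i. \<Sum>k. f k i) summable_on S"
    by (rule summable_on_cong[THEN iffD1, rotated]) (simp add: eqi)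
  have sumF: "(\<lambda>(k,i). f k i) summable_on (UNIV \<times> S)"
    using abs_summable_summable[OF absF] unfolding F_def .
  have "infsum (\<lambda>k. infsum (\<lambda>i. f k i) S) UNIV = infsum (\<lambda>i. infsum (\<lambda>k. f k i) UNIV) S"
    by (rule infsum_swap_banach[OF sumF])
  also have "\<dots> = infsum (\<lambda>i. \<Sum>k. f k i) S"
    by (rule infsum_cong) (simp add: eqi)
  finally have 1: "infsum (\<lambda>k. infsum (f k) S) UNIV = infsum (\<lambda>i. \<Sum>k. f k i) S" by simp
  have "summable (\<lambda>k. norm (infsum (f k) S))"
  proof (rule summable_comparison_test[OF _ s2])
    show "\<exists>N. \<forall>n\<ge>N. norm (norm (infsum (f n) S)) \<le> infsum (\<lambda>i. norm (f n i)) S"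
      using s1 by (auto intro!: norm_infsum_bound)
  qed
  from nat_infsum_suminf(2)[OF this] 1
  show "infsum (\<lambda>i. \<Sum>k. f k i) S = (\<Sum>k. infsum (f k) S)" by simp
qed



definition ip :: "'a set \<Rightarrow> ('a \<Rightarrow> complex) \<Rightarrow> ('a \<Rightarrow> complex) \<Rightarrow> complex" where
  "ip S u v = infsum (\<lambda>i. cnj (u i) * v i) S"

lemma nrD: assumes "nuclear_rep S x y"
  shows "x k \<in> l2 S" "y k \<in> l2 S" "summable (\<lambda>k. l2norm S (x k) * l2norm S (y k))"
  using assms by (auto simp: nuclear_rep_def)

lemma nr_coef_le: assumes "nuclear_rep S x y"
  shows "norm (x k i * cnj (y k j)) \<le> l2norm S (x k) * l2norm S (y k)"
  using nrD[OF assms] by (auto simp: norm_mult intro!: mult_mono l2_coord_le l2norm_nonneg)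

lemma nr_coef_summable: assumes "nuclear_rep S x y"
  shows "summable (\<lambda>k. norm (x k i * cnj (y k j)))"
  by (rule summable_comparison_test[OF _ nrD(3)[OF assms]]) (use nr_coef_le[OF assms] in auto)

lemma rep_op_vanish: assumes "nuclear_rep S x y" "i \<notin> S \<or> j \<notin> S"
  shows "rep_op x y i j = 0"
proof -
  have "(\<lambda>k. x k i * cnj (y k j)) = (\<lambda>k. 0)"
    using assms(2) l2_zero[OF nrD(1)[OF assms(1)]] l2_zero[OF nrD(2)[OF assms(1)]] by auto
  then show ?thesis unfolding rep_op_def by simp
qed

lemma tc_vanish: assumes "M \<in> trace_class S" "i \<notin> S \<or> j \<notin> S"
  shows "M i j = 0"
  using assms by (auto simp: trace_class_def intro: rep_op_vanish)

lemma ip_bound: "u \<in> l2 S \<Longrightarrow> v \<in> l2 S \<Longrightarrow> cmod (ip S u v) \<le> l2norm S u * l2norm S v"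
  unfolding ip_def by (rule CS_abs(2))

lemma trace_rep: assumes nr: "nuclear_rep S x y"
  shows "(\<lambda>i. rep_op x y i i) summable_on S"
    and "trace S (rep_op x y) = (\<Sum>k. ip S (y k) (x k))"
    and "cmod (trace S (rep_op x y)) \<le> (\<Sum>k. l2norm S (x k) * l2norm S (y k))"
proof -
  define f where "f = (\<lambda>k i. x k i * cnj (y k i))"
  have s1: "(\<lambda>i. norm (f k i)) summable_on S" for k
    using CS_summable[OF nrD(1,2)[OF nr]] by (simp add: f_def norm_mult)
  have b1: "infsum (\<lambda>i. norm (f k i)) S \<le> l2norm S (x k) * l2norm S (y k)" for k
    using CS_le[OF nrD(1,2)[OF nr]] by (simp add: f_def norm_mult)
  have s2: "summable (\<lambda>k. infsum (\<lambda>i. norm (f k i)) S)"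
    by (rule summable_comparison_test[OF _ nrD(3)[OF nr]]) (use b1 in \<open>auto simp: infsum_nonneg\<close>)
  have e: "(\<lambda>i. \<Sum>k. f k i) = (\<lambda>i. rep_op x y i i)" by (simp add: f_def rep_op_def)
  show "(\<lambda>i. rep_op x y i i) summable_on S" using fubini_G(1)[OF s1 s2] e by simp
  have ipk: "infsum (f k) S = ip S (y k) (x k)" for k
    by (simp add: f_def ip_def mult.commute)
  show tr: "trace S (rep_op x y) = (\<Sum>k. ip S (y k) (x k))"
    using fubini_G(2)[OF s1 s2] e by (simp add: trace_def ipk)
  have nb: "norm (ip S (y k) (x k)) \<le> l2norm S (x k) * l2norm S (y k)" for k
    using ip_bound[OF nrD(2,1)[OF nr]] by (simp add: mult.commute)
  have sn: "summable (\<lambda>k. norm (ip S (y k) (x k)))"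
    by (rule summable_comparison_test[OF _ nrD(3)[OF nr]]) (use nb in auto)
  have "cmod (\<Sum>k. ip S (y k) (x k)) \<le> (\<Sum>k. norm (ip S (y k) (x k)))"
    by (rule summable_norm[OF sn])
  also have "\<dots> \<le> (\<Sum>k. l2norm S (x k) * l2norm S (y k))"
    by (rule suminf_le[OF nb sn nrD(3)[OF nr]])
  finally show "cmod (trace S (rep_op x y)) \<le> (\<Sum>k. l2norm S (x k) * l2norm S (y k))"
    using tr by simp
qed

lemma inner_rep: assumes nr: "nuclear_rep S x y" and v: "v \<in> l2 S"
  shows "(\<lambda>j. rep_op x y i j * v j) summable_on S"
    and "infsum (\<lambda>j. rep_op x y i j * v j) S = (\<Sum>k. x k i * ip S (y k) v)"
proof -
  define f where "f = (\<lambda>k j. x k i * (cnj (y k j) * v j))"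
  have s1: "(\<lambda>j. norm (f k j)) summable_on S" for k
    using summable_on_cmult_right[OF CS_summable[OF nrD(2)[OF nr] v], where c="norm (x k i)"]
    by (simp add: f_def norm_mult)
  have b1: "infsum (\<lambda>j. norm (f k j)) S \<le> l2norm S (x k) * l2norm S (y k) * l2norm S v" for k
  proof -
    have "infsum (\<lambda>j. norm (f k j)) S = norm (x k i) * infsum (\<lambda>j. cmod (y k j) * cmod (v j)) S"
      by (simp add: f_def norm_mult infsum_cmult_right')
    also have "\<dots> \<le> l2norm S (x k) * (l2norm S (y k) * l2norm S v)"
      by (intro mult_mono l2_coord_le nrD[OF nr] CS_le[OF nrD(2)[OF nr] v] l2norm_nonneg)
         (auto intro: infsum_nonneg)
    finally show ?thesis by (simp add: mult.assoc)
  qed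
  have s2: "summable (\<lambda>k. infsum (\<lambda>j. norm (f k j)) S)"
    by (rule summable_comparison_test[OF _ summable_mult2[OF nrD(3)[OF nr], of "l2norm S v"]])
       (use b1 in \<open>auto simp: infsum_nonneg\<close>)
  have e: "(\<lambda>j. \<Sum>k. f k j) = (\<lambda>j. rep_op x y i j * v j)"
  proof
    fix j
    have "(\<Sum>k. f k j) = (\<Sum>k. x k i * cnj (y k j) * v j)" by (simp add: f_def mult.assoc)
    also have "\<dots> = (\<Sum>k. x k i * cnj (y k j)) * v j"
      by (rule suminf_mult2[symmetric]) (rule summable_norm_cancel[OF nr_coef_summable[OF nr]])
    finally show "(\<Sum>k. f k j) = rep_op x y i j * v j" by (simp add: rep_op_def)
  qed
  show "(\<lambda>j. rep_op x y i j * v j) summable_on S" using fubini_G(1)[OF s1 s2] e by simp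
  have ipk: "infsum (f k) S = x k i * ip S (y k) v" for k
    by (simp add: f_def ip_def infsum_cmult_right')
  show "infsum (\<lambda>j. rep_op x y i j * v j) S = (\<Sum>k. x k i * ip S (y k) v)"
    using fubini_G(2)[OF s1 s2] e by (simp add: ipk)
qed

lemma qform_rep: assumes nr: "nuclear_rep S x y" and v: "v \<in> l2 S"
  shows "(\<lambda>i. cnj (v i) * infsum (\<lambda>j. rep_op x y i j * v j) S) summable_on S"
    and "qform S (rep_op x y) v = (\<Sum>k. ip S v (x k) * ip S (y k) v)"
proof -
  define c where "c = (\<lambda>k. ip S (y k) v)"
  have cb: "norm (c k) \<le> l2norm S (y k) * l2norm S v" for k
    unfolding c_def by (rule ip_bound[OF nrD(2)[OF nr] v])
  define f where "f = (\<lambda>k i. (cnj (v i) * x k i) * c k)"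
  have s1: "(\<lambda>i. norm (f k i)) summable_on S" for k
    using summable_on_cmult_left[OF CS_summable[OF v nrD(1)[OF nr]], where c="norm (c k)"]
    by (simp add: f_def norm_mult)
  have b1: "infsum (\<lambda>i. norm (f k i)) S \<le> l2norm S (x k) * l2norm S (y k) * (l2norm S v * l2norm S v)" for k
  proof -
    have "infsum (\<lambda>i. norm (f k i)) S = infsum (\<lambda>i. cmod (v i) * cmod (x k i)) S * norm (c k)"
      by (simp add: f_def norm_mult infsum_cmult_left')
    also have "\<dots> \<le> (l2norm S v * l2norm S (x k)) * (l2norm S (y k) * l2norm S v)"
      by (intro mult_mono cb CS_le[OF v nrD(1)[OF nr]]) (auto intro!: mult_nonneg_nonneg l2norm_nonneg)
    finally show ?thesis by (simp add: algebra_simps)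
  qed
  have s2: "summable (\<lambda>k. infsum (\<lambda>i. norm (f k i)) S)"
    by (rule summable_comparison_test[OF _ summable_mult2[OF nrD(3)[OF nr]]])
       (use b1 in \<open>auto simp: infsum_nonneg\<close>)
  have e: "(\<lambda>i. \<Sum>k. f k i) = (\<lambda>i. cnj (v i) * infsum (\<lambda>j. rep_op x y i j * v j) S)"
  proof
    fix i
    have sm: "summable (\<lambda>k. x k i * c k)"
    proof (rule summable_norm_cancel, rule summable_comparison_test[OF _ summable_mult2[OF nrD(3)[OF nr], of "l2norm S v"]])
      show "\<exists>N. \<forall>n\<ge>N. norm (norm (x n i * c n)) \<le> l2norm S (x n) * l2norm S (y n) * l2norm S v"
        using cb by (auto simp: norm_mult mult.assoc intro!: mult_mono l2_coord_le nrD[OF nr] l2norm_nonneg)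
    qed
    have "(\<Sum>k. f k i) = cnj (v i) * (\<Sum>k. x k i * c k)"
      unfolding f_def mult.assoc by (rule suminf_mult[OF sm])
    then show "(\<Sum>k. f k i) = cnj (v i) * infsum (\<lambda>j. rep_op x y i j * v j) S"
      by (simp add: inner_rep(2)[OF nr v] c_def)
  qed
  show "(\<lambda>i. cnj (v i) * infsum (\<lambda>j. rep_op x y i j * v j) S) summable_on S"
    using fubini_G(1)[OF s1 s2] e by simp
  have ipk: "infsum (f k) S = ip S v (x k) * c k" for k
    by (simp add: f_def ip_def infsum_cmult_left')
  show "qform S (rep_op x y) v = (\<Sum>k. ip S v (x k) * ip S (y k) v)"
    using fubini_G(2)[OF s1 s2] e by (simp add: ipk qform_def c_def)
qed



definition il :: "(nat \<Rightarrow> 'b) \<Rightarrow> (nat \<Rightarrow> 'b) \<Rightarrow> nat \<Rightarrow> 'b" where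
  "il p q m = (if even m then p (m div 2) else q (m div 2))"

lemma il_sums: fixes p q :: "nat \<Rightarrow> 'b::real_normed_vector"
  assumes "p sums a" "q sums b" shows "il p q sums (a + b)"
proof -
  define P where "P = (\<lambda>m. if even m then p (m div 2) else 0)"
  define Q where "Q = (\<lambda>m. if odd m then q (m div 2) else 0)"
  have "(\<lambda>n. P (2*n)) sums a \<longleftrightarrow> P sums a"
  proof (rule sums_mono_reindex)
    show "strict_mono (\<lambda>n::nat. 2*n)" by (simp add: strict_mono_def)
    fix n assume "n \<notin> range (\<lambda>n::nat. 2*n)"
    then have "odd n" by (metis dvdE rangeI)
    then show "P n = 0" by (simp add: P_def)
  qed
  moreover have "(\<lambda>n. P (2*n)) = p" by (simp add: P_def)
  ultimately have P: "P sums a" using assms(1) by simp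
  have "(\<lambda>n. Q (2*n+1)) sums b \<longleftrightarrow> Q sums b"
  proof (rule sums_mono_reindex)
    show "strict_mono (\<lambda>n::nat. 2*n+1)" by (simp add: strict_mono_def)
    fix n assume "n \<notin> range (\<lambda>n::nat. 2*n+1)"
    then have "even n" by (metis oddE rangeI)
    then show "Q n = 0" by (simp add: Q_def)
  qed
  moreover have "(\<lambda>n. Q (2*n+1)) = q" by (simp add: Q_def)
  ultimately have Q: "Q sums b" using assms(2) by simp
  have "il p q = (\<lambda>m. P m + Q m)" by (auto simp: il_def P_def Q_def)
  then show ?thesis using sums_add[OF P Q] by simp
qed

lemma nr_add: assumes n1: "nuclear_rep S x y" and n2: "nuclear_rep S x' y'"
  shows "nuclear_rep S (il x x') (il y y')"
    and "rep_op (il x x') (il y y') = (\<lambda>i j. rep_op x y i j + rep_op x' y' i j)"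
    and "(\<Sum>k. l2norm S (il x x' k) * l2norm S (il y y' k)) =
         (\<Sum>k. l2norm S (x k) * l2norm S (y k)) + (\<Sum>k. l2norm S (x' k) * l2norm S (y' k))"
proof -
  have e: "(\<lambda>k. l2norm S (il x x' k) * l2norm S (il y y' k)) =
      il (\<lambda>k. l2norm S (x k) * l2norm S (y k)) (\<lambda>k. l2norm S (x' k) * l2norm S (y' k))"
    by (auto simp: il_def)
  have s: "(\<lambda>k. l2norm S (il x x' k) * l2norm S (il y y' k)) sums
     ((\<Sum>k. l2norm S (x k) * l2norm S (y k)) + (\<Sum>k. l2norm S (x' k) * l2norm S (y' k)))"
    unfolding e by (intro il_sums summable_sums nrD[OF n1] nrD[OF n2])
  have l: "il x x' k \<in> l2 S \<and> il y y' k \<in> l2 S" for k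
    using nrD[OF n1] nrD[OF n2] by (auto simp: il_def)
  show "nuclear_rep S (il x x') (il y y')"
    using l s by (auto simp: nuclear_rep_def sums_iff)
  show "(\<Sum>k. l2norm S (il x x' k) * l2norm S (il y y' k)) =
         (\<Sum>k. l2norm S (x k) * l2norm S (y k)) + (\<Sum>k. l2norm S (x' k) * l2norm S (y' k))"
    using s by (simp add: sums_iff)
  show "rep_op (il x x') (il y y') = (\<lambda>i j. rep_op x y i j + rep_op x' y' i j)"
  proof (intro ext)
    fix i j
    have e2: "(\<lambda>k. il x x' k i * cnj (il y y' k j)) = il (\<lambda>k. x k i * cnj (y k j)) (\<lambda>k. x' k i * cnj (y' k j))"
      by (auto simp: il_def)
    have "(\<lambda>k. il x x' k i * cnj (il y y' k j)) sums (rep_op x y i j + rep_op x' y' i j)"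
      unfolding e2 rep_op_def
      by (intro il_sums summable_sums summable_norm_cancel[OF nr_coef_summable[OF n1]]
          summable_norm_cancel[OF nr_coef_summable[OF n2]])
    then show "rep_op (il x x') (il y y') i j = rep_op x y i j + rep_op x' y' i j"
      by (simp add: sums_iff rep_op_def)
  qed
qed

lemma l2_scale: assumes "x \<in> l2 S"
  shows "(\<lambda>i. c * x i) \<in> l2 S" "l2norm S (\<lambda>i. c * x i) = cmod c * l2norm S x"
proof -
  have e: "(\<lambda>i. (cmod (c * x i))^2) = (\<lambda>i. (cmod c)^2 * (cmod (x i))^2)"
    by (simp add: norm_mult power_mult_distrib)
  show "(\<lambda>i. c * x i) \<in> l2 S"
  proof (rule l2I)
    show "(\<lambda>i. (cmod (c * x i))^2) summable_on S"
      unfolding e by (rule summable_on_cmult_right[OF l2_summ[OF assms]])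
  qed (use assms in \<open>simp add: l2_zero\<close>)
  show "l2norm S (\<lambda>i. c * x i) = cmod c * l2norm S x"
    unfolding l2norm_def e infsum_cmult_right' by (simp add: real_sqrt_mult)
qed

lemma nr_scale: assumes n1: "nuclear_rep S x y"
  shows "nuclear_rep S (\<lambda>k i. c * x k i) y"
    and "rep_op (\<lambda>k i. c * x k i) y = (\<lambda>i j. c * rep_op x y i j)"
    and "(\<Sum>k. l2norm S (\<lambda>i. c * x k i) * l2norm S (y k)) = cmod c * (\<Sum>k. l2norm S (x k) * l2norm S (y k))"
proof -
  have e: "(\<lambda>k. l2norm S (\<lambda>i. c * x k i) * l2norm S (y k)) = (\<lambda>k. cmod c * (l2norm S (x k) * l2norm S (y k)))"
    using l2_scale(2)[OF nrD(1)[OF n1]] by (simp add: mult.assoc)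
  show "nuclear_rep S (\<lambda>k i. c * x k i) y"
    using nrD[OF n1] l2_scale(1)[OF nrD(1)[OF n1]] unfolding nuclear_rep_def e
    by (auto intro: summable_mult)
  show "(\<Sum>k. l2norm S (\<lambda>i. c * x k i) * l2norm S (y k)) = cmod c * (\<Sum>k. l2norm S (x k) * l2norm S (y k))"
    unfolding e by (rule suminf_mult[OF nrD(3)[OF n1]])
  show "rep_op (\<lambda>k i. c * x k i) y = (\<lambda>i j. c * rep_op x y i j)"
    unfolding rep_op_def
    by (intro ext) (simp add: mult.assoc suminf_mult[OF summable_norm_cancel[OF nr_coef_summable[OF n1]]])
qed

lemma tc_add: assumes "M \<in> trace_class S" "N \<in> trace_class S"
  shows "(\<lambda>i j. M i j + N i j) \<in> trace_class S"
proof -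
  obtain x y where 1: "nuclear_rep S x y" "M = rep_op x y" using assms(1) by (auto simp: trace_class_def)
  obtain x' y' where 2: "nuclear_rep S x' y'" "N = rep_op x' y'" using assms(2) by (auto simp: trace_class_def)
  show ?thesis unfolding trace_class_def mem_Collect_eq
    by (intro exI conjI, rule nr_add(1)[OF 1(1) 2(1)]) (simp add: nr_add(2)[OF 1(1) 2(1)] 1(2) 2(2))
qed

lemma tc_scale: assumes "M \<in> trace_class S"
  shows "(\<lambda>i j. c * M i j) \<in> trace_class S"
proof -
  obtain x y where 1: "nuclear_rep S x y" "M = rep_op x y" using assms(1) by (auto simp: trace_class_def)
  show ?thesis unfolding trace_class_def mem_Collect_eq
    by (intro exI conjI, rule nr_scale(1)[OF 1(1)]) (simp add: nr_scale(2)[OF 1(1)] 1(2))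
qed

lemma tc_diff: assumes "M \<in> trace_class S" "N \<in> trace_class S"
  shows "(\<lambda>i j. M i j - N i j) \<in> trace_class S"
  using tc_add[OF assms(1) tc_scale[OF assms(2), of "-1"]] by simp

lemma tc_diag: "M \<in> trace_class S \<Longrightarrow> (\<lambda>i. M i i) summable_on S"
  unfolding trace_class_def using trace_rep(1) by blast

lemma trace_add: "M \<in> trace_class S \<Longrightarrow> N \<in> trace_class S \<Longrightarrow>
   trace S (\<lambda>i j. M i j + N i j) = trace S M + trace S N"
  unfolding trace_def by (intro infsum_add tc_diag)

lemma trace_scale: "trace S (\<lambda>i j. c * M i j) = c * trace S M"
  unfolding trace_def by (rule infsum_cmult_right')

lemma trace_diff: assumes "M \<in> trace_class S" "N \<in> trace_class S"
  shows "trace S (\<lambda>i j. M i j - N i j) = trace S M - trace S N"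
  using trace_add[OF assms(1) tc_scale[OF assms(2), of "-1"]] trace_scale[of S "-1" N] by simp

lemma nr_sum_nonneg: "nuclear_rep S x y \<Longrightarrow> 0 \<le> (\<Sum>k. l2norm S (x k) * l2norm S (y k))"
  by (intro suminf_nonneg nrD mult_nonneg_nonneg l2norm_nonneg)

lemma tn_lower: assumes "nuclear_rep S x y" "M = rep_op x y"
  shows "trace_norm S M \<le> (\<Sum>k. l2norm S (x k) * l2norm S (y k))"
  unfolding trace_norm_def
proof (rule cInf_lower)
  show "bdd_below {\<Sum>k. l2norm S (x k) * l2norm S (y k) |x y. nuclear_rep S x y \<and> M = rep_op x y}"
    by (rule bdd_belowI[of _ 0]) (auto intro: nr_sum_nonneg)
qed (use assms in auto)

lemma tn_greatest: assumes "M \<in> trace_class S"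
  and "\<And>x y. nuclear_rep S x y \<Longrightarrow> M = rep_op x y \<Longrightarrow> c \<le> (\<Sum>k. l2norm S (x k) * l2norm S (y k))"
  shows "c \<le> trace_norm S M"
  unfolding trace_norm_def
  by (rule cInf_greatest) (use assms in \<open>auto simp: trace_class_def\<close>)

lemma tn_nonneg: "M \<in> trace_class S \<Longrightarrow> 0 \<le> trace_norm S M"
  by (rule tn_greatest) (auto intro: nr_sum_nonneg)

lemma tn_approx: assumes "M \<in> trace_class S" "e > 0"
  shows "\<exists>x y. nuclear_rep S x y \<and> M = rep_op x y \<and> (\<Sum>k. l2norm S (x k) * l2norm S (y k)) < trace_norm S M + e"
proof -
  have "\<exists>z\<in>{\<Sum>k. l2norm S (x k) * l2norm S (y k) |x y. nuclear_rep S x y \<and> M = rep_op x y}. z < trace_norm S M + e"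
    unfolding trace_norm_def
    by (rule cInf_lessD) (use assms in \<open>auto simp: trace_class_def trace_norm_def\<close>)
  then show ?thesis by blast
qed

lemma trace_le_tn: assumes "M \<in> trace_class S" shows "cmod (trace S M) \<le> trace_norm S M"
  by (rule tn_greatest[OF assms]) (use trace_rep(3) in blast)

lemma tn_triangle: assumes M: "M \<in> trace_class S" and N: "N \<in> trace_class S"
  shows "trace_norm S (\<lambda>i j. M i j + N i j) \<le> trace_norm S M + trace_norm S N"
proof (rule field_le_epsilon)
  fix e :: real assume e: "e > 0"
  obtain x y where 1: "nuclear_rep S x y" "M = rep_op x y" "(\<Sum>k. l2norm S (x k) * l2norm S (y k)) < trace_norm S M + e/2"
    using tn_approx[OF M, of "e/2"] e by auto
  obtain x' y' where 2: "nuclear_rep S x' y'" "N = rep_op x' y'" "(\<Sum>k. l2norm S (x' k) * l2norm S (y' k)) < trace_norm S N + e/2"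
    using tn_approx[OF N, of "e/2"] e by auto
  have "trace_norm S (\<lambda>i j. M i j + N i j) \<le> (\<Sum>k. l2norm S (il x x' k) * l2norm S (il y y' k))"
    by (rule tn_lower[OF nr_add(1)[OF 1(1) 2(1)]]) (simp add: nr_add(2)[OF 1(1) 2(1)] 1(2) 2(2))
  also have "\<dots> < trace_norm S M + trace_norm S N + e"
    using 1(3) 2(3) by (simp add: nr_add(3)[OF 1(1) 2(1)])
  finally show "trace_norm S (\<lambda>i j. M i j + N i j) \<le> trace_norm S M + trace_norm S N + e" by simp
qed



lemma l2_fin: assumes "finite F" "F \<subseteq> S" "\<And>i. i \<notin> F \<Longrightarrow> x i = 0"
  shows "x \<in> l2 S" "l2norm S x = sqrt (\<Sum>i\<in>F. (cmod (x i))^2)"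
proof -
  have "(\<lambda>i. (cmod (x i))^2) summable_on S \<longleftrightarrow> (\<lambda>i. (cmod (x i))^2) summable_on F"
    by (rule summable_on_cong_neutral) (use assms in auto)
  then show "x \<in> l2 S" using assms by (auto intro!: l2I)
  have "infsum (\<lambda>i. (cmod (x i))^2) S = infsum (\<lambda>i. (cmod (x i))^2) F"
    by (rule infsum_cong_neutral) (use assms in auto)
  then show "l2norm S x = sqrt (\<Sum>i\<in>F. (cmod (x i))^2)"
    using assms(1) by (simp add: l2norm_def)
qed

lemma l2_pull: assumes x: "x \<in> l2 S" and g: "inj_on g T" "g ` T \<subseteq> S"
  shows "(\<lambda>t. if t \<in> T then x (g t) else 0) \<in> l2 T"
    and "l2norm T (\<lambda>t. if t \<in> T then x (g t) else 0) \<le> l2norm S x"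
proof -
  let ?f = "\<lambda>s. (cmod (x s))^2"
  have sS: "?f summable_on S" by (rule l2_summ[OF x])
  have sg: "?f summable_on (g ` T)" by (rule summable_on_subset_banach[OF sS g(2)])
  have e: "(\<lambda>t. (cmod (if t \<in> T then x (g t) else 0))^2) summable_on T \<longleftrightarrow> (?f \<circ> g) summable_on T"
    by (rule summable_on_cong) auto
  have sT: "(?f \<circ> g) summable_on T" using summable_on_reindex[OF g(1), THEN iffD1, OF sg] .
  show "(\<lambda>t. if t \<in> T then x (g t) else 0) \<in> l2 T"
    by (rule l2I) (use e sT in auto)
  have "infsum (\<lambda>t. (cmod (if t \<in> T then x (g t) else 0))^2) T = infsum (?f \<circ> g) T"
    by (rule infsum_cong) auto
  also have "\<dots> = infsum ?f (g ` T)" by (rule infsum_reindex[OF g(1), symmetric])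
  also have "\<dots> \<le> infsum ?f S"
    by (rule infsum_mono_neutral[OF sg sS]) (use g(2) in auto)
  finally show "l2norm T (\<lambda>t. if t \<in> T then x (g t) else 0) \<le> l2norm S x"
    unfolding l2norm_def by simp
qed

lemma tc_pull: assumes M: "M \<in> trace_class S" and g: "inj_on g T" "g ` T \<subseteq> S"
  shows "(\<lambda>t t'. if t \<in> T \<and> t' \<in> T then M (g t) (g t') else 0) \<in> trace_class T"
    and "trace_norm T (\<lambda>t t'. if t \<in> T \<and> t' \<in> T then M (g t) (g t') else 0) \<le> trace_norm S M"
proof -
  let ?P = "\<lambda>t t'. if t \<in> T \<and> t' \<in> T then M (g t) (g t') else 0"
  have main: "nuclear_rep T (\<lambda>k t. if t \<in> T then x k (g t) else 0) (\<lambda>k t. if t \<in> T then y k (g t) else 0)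
     \<and> ?P = rep_op (\<lambda>k t. if t \<in> T then x k (g t) else 0) (\<lambda>k t. if t \<in> T then y k (g t) else 0)
     \<and> (\<Sum>k. l2norm T (\<lambda>t. if t \<in> T then x k (g t) else 0) * l2norm T (\<lambda>t. if t \<in> T then y k (g t) else 0))
        \<le> (\<Sum>k. l2norm S (x k) * l2norm S (y k))"
    if nr: "nuclear_rep S x y" and Mx: "M = rep_op x y" for x y
  proof (intro conjI)
    let ?a = "\<lambda>k. l2norm T (\<lambda>t. if t \<in> T then x k (g t) else 0) * l2norm T (\<lambda>t. if t \<in> T then y k (g t) else 0)"
    have le: "?a k \<le> l2norm S (x k) * l2norm S (y k)" for k
      by (intro mult_mono l2_pull(2)[OF _ g] nrD[OF nr] l2norm_nonneg)
    have sa: "summable ?a"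
      by (rule summable_comparison_test[OF _ nrD(3)[OF nr]]) (use le in \<open>auto simp: abs_mult l2norm_nonneg\<close>)
    show "nuclear_rep T (\<lambda>k t. if t \<in> T then x k (g t) else 0) (\<lambda>k t. if t \<in> T then y k (g t) else 0)"
      unfolding nuclear_rep_def using sa l2_pull(1)[OF nrD(1)[OF nr] g] l2_pull(1)[OF nrD(2)[OF nr] g] by auto
    show "(\<Sum>k. ?a k) \<le> (\<Sum>k. l2norm S (x k) * l2norm S (y k))"
      by (rule suminf_le[OF le sa nrD(3)[OF nr]])
    show "?P = rep_op (\<lambda>k t. if t \<in> T then x k (g t) else 0) (\<lambda>k t. if t \<in> T then y k (g t) else 0)"
      by (intro ext) (auto simp: rep_op_def Mx)
  qed
  obtain x y where xy: "nuclear_rep S x y" "M = rep_op x y" using M by (auto simp: trace_class_def)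
  show "?P \<in> trace_class T" using main[OF xy] unfolding trace_class_def by blast
  show "trace_norm T ?P \<le> trace_norm S M"
  proof (rule tn_greatest[OF M])
    fix x y assume "nuclear_rep S x y" "M = rep_op x y"
    from main[OF this] have m: "nuclear_rep T (\<lambda>k t. if t \<in> T then x k (g t) else 0) (\<lambda>k t. if t \<in> T then y k (g t) else 0)"
     "?P = rep_op (\<lambda>k t. if t \<in> T then x k (g t) else 0) (\<lambda>k t. if t \<in> T then y k (g t) else 0)"
     "(\<Sum>k. l2norm T (\<lambda>t. if t \<in> T then x k (g t) else 0) * l2norm T (\<lambda>t. if t \<in> T then y k (g t) else 0))
        \<le> (\<Sum>k. l2norm S (x k) * l2norm S (y k))" by auto
    show "trace_norm T ?P \<le> (\<Sum>k. l2norm S (x k) * l2norm S (y k))"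
      using tn_lower[OF m(1,2)] m(3) by linarith
  qed
qed

definition push :: "('t \<Rightarrow> 's) \<Rightarrow> 't set \<Rightarrow> ('t \<Rightarrow> complex) \<Rightarrow> 's \<Rightarrow> complex" where
  "push g T x = (\<lambda>s. if s \<in> g ` T then x (the_inv_into T g s) else 0)"

lemma l2_push: assumes x: "x \<in> l2 T" and g: "inj_on g T" "g ` T \<subseteq> S"
  shows "push g T x \<in> l2 S" and "l2norm S (push g T x) = l2norm T x"
proof -
  let ?f = "\<lambda>s. (cmod (push g T x s))^2"
  have c: "(?f \<circ> g) t = (cmod (x t))^2" if "t \<in> T" for t
    using that g by (simp add: push_def the_inv_into_f_f)
  have sT: "(?f \<circ> g) summable_on T"
    by (rule summable_on_cong[THEN iffD2, OF c l2_summ[OF x]])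
  have sg: "?f summable_on (g ` T)" using summable_on_reindex[OF g(1), THEN iffD2, OF sT] .
  have sS: "?f summable_on S \<longleftrightarrow> ?f summable_on (g ` T)"
    by (rule summable_on_cong_neutral) (use g in \<open>auto simp: push_def\<close>)
  show "push g T x \<in> l2 S"
    by (rule l2I) (use sS sg g in \<open>auto simp: push_def\<close>)
  have "infsum ?f S = infsum ?f (g ` T)"
    by (rule infsum_cong_neutral) (use g in \<open>auto simp: push_def\<close>)
  also have "\<dots> = infsum (?f \<circ> g) T" by (rule infsum_reindex[OF g(1)])
  also have "\<dots> = infsum (\<lambda>t. (cmod (x t))^2) T" by (rule infsum_cong) (rule c)
  finally show "l2norm S (push g T x) = l2norm T x" unfolding l2norm_def by simp
qed

lemma tc_push: assumes M: "M \<in> trace_class T" and g: "inj_on g T" "g ` T \<subseteq> S"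
  shows "(\<lambda>s s'. if s \<in> g ` T \<and> s' \<in> g ` T then M (the_inv_into T g s) (the_inv_into T g s') else 0) \<in> trace_class S"
    and "trace_norm S (\<lambda>s s'. if s \<in> g ` T \<and> s' \<in> g ` T then M (the_inv_into T g s) (the_inv_into T g s') else 0) \<le> trace_norm T M"
proof -
  let ?Q = "\<lambda>s s'. if s \<in> g ` T \<and> s' \<in> g ` T then M (the_inv_into T g s) (the_inv_into T g s') else 0"
  have main: "nuclear_rep S (\<lambda>k. push g T (x k)) (\<lambda>k. push g T (y k))
     \<and> ?Q = rep_op (\<lambda>k. push g T (x k)) (\<lambda>k. push g T (y k))
     \<and> (\<Sum>k. l2norm S (push g T (x k)) * l2norm S (push g T (y k)))
        = (\<Sum>k. l2norm T (x k) * l2norm T (y k))"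
    if nr: "nuclear_rep T x y" and Mx: "M = rep_op x y" for x y
  proof (intro conjI)
    have e: "(\<lambda>k. l2norm S (push g T (x k)) * l2norm S (push g T (y k))) = (\<lambda>k. l2norm T (x k) * l2norm T (y k))"
      using l2_push(2)[OF nrD(1)[OF nr] g] l2_push(2)[OF nrD(2)[OF nr] g] by simp
    show "nuclear_rep S (\<lambda>k. push g T (x k)) (\<lambda>k. push g T (y k))"
      unfolding nuclear_rep_def e using nrD[OF nr] l2_push(1)[OF _ g] by auto
    show "(\<Sum>k. l2norm S (push g T (x k)) * l2norm S (push g T (y k))) = (\<Sum>k. l2norm T (x k) * l2norm T (y k))"
      using e by simp
    show "?Q = rep_op (\<lambda>k. push g T (x k)) (\<lambda>k. push g T (y k))"
      by (intro ext) (auto simp: rep_op_def Mx push_def)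
  qed
  obtain x y where xy: "nuclear_rep T x y" "M = rep_op x y" using M by (auto simp: trace_class_def)
  show "?Q \<in> trace_class S" using main[OF xy] unfolding trace_class_def by blast
  show "trace_norm S ?Q \<le> trace_norm T M"
  proof (rule tn_greatest[OF M])
    fix x y assume "nuclear_rep T x y" "M = rep_op x y"
    from main[OF this] show "trace_norm S ?Q \<le> (\<Sum>k. l2norm T (x k) * l2norm T (y k))"
      using tn_lower by metis
  qed
qed

definition Emat :: "'a \<Rightarrow> 'a \<Rightarrow> complex \<Rightarrow> 'a \<Rightarrow> 'a \<Rightarrow> complex" where
  "Emat p q c = (\<lambda>s s'. if s = p \<and> s' = q then c else 0)"

lemma tc_Emat: assumes "p \<in> S" "q \<in> S"
  shows "Emat p q c \<in> trace_class S" "trace_norm S (Emat p q c) \<le> cmod c"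
proof -
  define x where "x = (\<lambda>k::nat. \<lambda>s. if k = 0 \<and> s = p then c else 0)"
  define y where "y = (\<lambda>k::nat. \<lambda>s. if k = 0 \<and> s = q then (1::complex) else 0)"
  have lx: "x k \<in> l2 S" "l2norm S (x k) = (if k = 0 then cmod c else 0)" for k
    using l2_fin[of "{p}" S "x k"] assms by (auto simp: x_def)
  have ly: "y k \<in> l2 S" "l2norm S (y k) = (if k = 0 then 1 else 0)" for k
    using l2_fin[of "{q}" S "y k"] assms by (auto simp: y_def)
  have e: "(\<lambda>k. l2norm S (x k) * l2norm S (y k)) = (\<lambda>k. if k = 0 then cmod c else 0)"
    using lx ly by auto
  have nr: "nuclear_rep S x y"
    unfolding nuclear_rep_def e using lx ly by (auto intro: summable_finite[of "{0}"])
  have sm: "(\<Sum>k. l2norm S (x k) * l2norm S (y k)) = cmod c"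
    unfolding e by (subst suminf_finite[of "{0}"]) auto
  have r: "Emat p q c = rep_op x y"
  proof (intro ext)
    fix s s'
    have "rep_op x y s s' = (\<Sum>k\<in>{0}. x k s * cnj (y k s'))"
      unfolding rep_op_def by (rule suminf_finite) (auto simp: x_def)
    then show "Emat p q c s s' = rep_op x y s s'" by (simp add: Emat_def x_def y_def)
  qed
  show "Emat p q c \<in> trace_class S" using nr r by (auto simp: trace_class_def)
  show "trace_norm S (Emat p q c) \<le> cmod c" using tn_lower[OF nr r] sm by simp
qed

lemma tc_zero: "(\<lambda>i j. 0) \<in> trace_class S"
proof -
  have l: "(\<lambda>i. 0) \<in> l2 S" "l2norm S (\<lambda>i. 0) = 0" using l2_fin[of "{}" S "\<lambda>i. 0"] by auto
  have "nuclear_rep S (\<lambda>k i. 0) (\<lambda>k i. 0)" using l by (simp add: nuclear_rep_def)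
  moreover have "(\<lambda>i j. 0) = rep_op (\<lambda>k i. 0) (\<lambda>k i. 0)" by (simp add: rep_op_def)
  ultimately show ?thesis by (auto simp: trace_class_def)
qed

lemma tc_sum: "finite I \<Longrightarrow> (\<And>a. a \<in> I \<Longrightarrow> f a \<in> trace_class S) \<Longrightarrow> (\<lambda>i j. \<Sum>a\<in>I. f a i j) \<in> trace_class S"
proof (induction I rule: finite_induct)
  case empty then show ?case using tc_zero by simp
next
  case (insert a I)
  then show ?case using tc_add[of "f a" S "\<lambda>i j. \<Sum>a\<in>I. f a i j"] by simp
qed

lemma trace_sum: "finite I \<Longrightarrow> (\<And>a. a \<in> I \<Longrightarrow> f a \<in> trace_class S) \<Longrightarrow>
   trace S (\<lambda>i j. \<Sum>a\<in>I. f a i j) = (\<Sum>a\<in>I. trace S (f a))"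
proof (induction I rule: finite_induct)
  case empty then show ?case by (simp add: trace_def)
next
  case (insert a I)
  then show ?case using trace_add[of "f a" S "\<lambda>i j. \<Sum>a\<in>I. f a i j"] tc_sum[of I f S] by simp
qed



lemma tc_pull2: assumes M: "M \<in> trace_class S" and g: "inj_on g T" "g ` T \<subseteq> S"
  and h: "inj_on h T" "h ` T \<subseteq> S"
  shows "(\<lambda>t t'. if t \<in> T \<and> t' \<in> T then M (g t) (h t') else 0) \<in> trace_class T"
proof -
  obtain x y where nr: "nuclear_rep S x y" and Mx: "M = rep_op x y" using M by (auto simp: trace_class_def)
  let ?a = "\<lambda>k. l2norm T (\<lambda>t. if t \<in> T then x k (g t) else 0) * l2norm T (\<lambda>t. if t \<in> T then y k (h t) else 0)"
  have le: "?a k \<le> l2norm S (x k) * l2norm S (y k)" for k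
    by (intro mult_mono l2_pull(2)[OF _ g] l2_pull(2)[OF _ h] nrD[OF nr] l2norm_nonneg)
  have sa: "summable ?a"
    by (rule summable_comparison_test[OF _ nrD(3)[OF nr]]) (use le in \<open>auto simp: abs_mult l2norm_nonneg\<close>)
  have "nuclear_rep T (\<lambda>k t. if t \<in> T then x k (g t) else 0) (\<lambda>k t. if t \<in> T then y k (h t) else 0)"
    unfolding nuclear_rep_def using sa l2_pull(1)[OF nrD(1)[OF nr] g] l2_pull(1)[OF nrD(2)[OF nr] h] by auto
  moreover have "(\<lambda>t t'. if t \<in> T \<and> t' \<in> T then M (g t) (h t') else 0) =
     rep_op (\<lambda>k t. if t \<in> T then x k (g t) else 0) (\<lambda>k t. if t \<in> T then y k (h t) else 0)"
    by (intro ext) (auto simp: rep_op_def Mx)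
  ultimately show ?thesis unfolding trace_class_def by blast
qed

lemma l2_dom: assumes "\<And>i. i \<notin> S \<Longrightarrow> y i = 0" "g summable_on S" "\<And>i. i \<in> S \<Longrightarrow> (cmod (y i))^2 \<le> g i"
  shows "y \<in> l2 S" "l2norm S y \<le> sqrt (infsum g S)"
proof -
  have s: "(\<lambda>i. (cmod (y i))^2) summable_on S"
    by (rule summable_on_comparison_test[OF assms(2)]) (use assms(3) in auto)
  then show "y \<in> l2 S" using assms(1) by (auto intro: l2I)
  show "l2norm S y \<le> sqrt (infsum g S)"
    unfolding l2norm_def by (intro real_sqrt_le_mono infsum_mono s assms(2,3))
qed

definition ten :: "('a \<Rightarrow> complex) \<Rightarrow> (nat \<Rightarrow> complex) \<Rightarrow> nat \<Rightarrow> ('a \<times> nat \<Rightarrow> complex)" where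
  "ten u a n = (\<lambda>(i,k). if k < n then u i * a k else 0)"

lemma l2_ten: assumes u: "u \<in> l2 A" shows "ten u a n \<in> l2 (A \<times> {..<n})"
proof (rule l2I)
  show "(\<lambda>p. (cmod (ten u a n p))^2) summable_on A \<times> {..<n}"
    unfolding Sigma_def[symmetric]
  proof (rule summable_on_SigmaI)
    show "((\<lambda>k. (cmod (ten u a n (i, k)))^2) has_sum (\<Sum>k<n. (cmod (ten u a n (i, k)))^2)) {..<n}" for i
      by (rule has_sum_finite) simp
    have e: "(\<lambda>i. \<Sum>k<n. (cmod (ten u a n (i, k)))^2) = (\<lambda>i. (cmod (u i))^2 * (\<Sum>k<n. (cmod (a k))^2))"
      by (auto simp: ten_def norm_mult power_mult_distrib sum_distrib_left)
    show "(\<lambda>i. \<Sum>k<n. (cmod (ten u a n (i, k)))^2) summable_on A"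
      unfolding e by (rule summable_on_cmult_left[OF l2_summ[OF u]])
  qed simp
next
  fix p assume "p \<notin> A \<times> {..<n}"
  then show "ten u a n p = 0" by (cases p) (auto simp: ten_def l2_zero[OF u])
qed

lemma qform_fin: assumes "finite F" "F \<subseteq> S" "\<And>p. p \<notin> F \<Longrightarrow> v p = 0"
  shows "qform S M v = (\<Sum>p\<in>F. cnj (v p) * (\<Sum>q\<in>F. M p q * v q))"
proof -
  have i: "infsum (\<lambda>q. M p q * v q) S = (\<Sum>q\<in>F. M p q * v q)" for p
  proof -
    have "infsum (\<lambda>q. M p q * v q) S = infsum (\<lambda>q. M p q * v q) F"
      by (rule infsum_cong_neutral) (use assms in auto)
    then show ?thesis using assms(1) by simp
  qed
  have "qform S M v = infsum (\<lambda>p. cnj (v p) * (\<Sum>q\<in>F. M p q * v q)) S"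
    unfolding qform_def i ..
  also have "\<dots> = infsum (\<lambda>p. cnj (v p) * (\<Sum>q\<in>F. M p q * v q)) F"
    by (rule infsum_cong_neutral) (use assms in auto)
  finally show ?thesis using assms(1) by simp
qed

lemma ip_ten: assumes u: "u \<in> l2 A" and z: "z \<in> l2 (A \<times> {..<n})"
  shows "ip (A \<times> {..<n}) (ten u a n) z = ip A u (\<lambda>i. \<Sum>k<n. cnj (a k) * z (i,k))"
    and "ip (A \<times> {..<n}) z (ten u a n) = ip A (\<lambda>i. \<Sum>k<n. cnj (a k) * z (i,k)) u"
proof -
  have s1: "(\<lambda>(i,k). cnj (ten u a n (i,k)) * z (i,k)) summable_on (A \<times> {..<n})"
    using CS_abs(1)[OF l2_ten[OF u] z] by (simp add: case_prod_unfold)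
  have "ip (A \<times> {..<n}) (ten u a n) z = infsum (\<lambda>i. infsum (\<lambda>k. cnj (ten u a n (i,k)) * z (i,k)) {..<n}) A"
    unfolding ip_def Sigma_def[symmetric] by (subst infsum_Sigma'_banach[OF s1[unfolded Sigma_def[symmetric]]]) (simp add: case_prod_unfold)
  also have "\<dots> = ip A u (\<lambda>i. \<Sum>k<n. cnj (a k) * z (i,k))"
    unfolding ip_def by (rule infsum_cong) (simp add: ten_def sum_distrib_left mult.assoc)
  finally show "ip (A \<times> {..<n}) (ten u a n) z = ip A u (\<lambda>i. \<Sum>k<n. cnj (a k) * z (i,k))" .
  have s2: "(\<lambda>(i,k). cnj (z (i,k)) * ten u a n (i,k)) summable_on (A \<times> {..<n})"
    using CS_abs(1)[OF z l2_ten[OF u]] by (simp add: case_prod_unfold)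
  have "ip (A \<times> {..<n}) z (ten u a n) = infsum (\<lambda>i. infsum (\<lambda>k. cnj (z (i,k)) * ten u a n (i,k)) {..<n}) A"
    unfolding ip_def Sigma_def[symmetric] by (subst infsum_Sigma'_banach[OF s2[unfolded Sigma_def[symmetric]]]) (simp add: case_prod_unfold)
  also have "\<dots> = ip A (\<lambda>i. \<Sum>k<n. cnj (a k) * z (i,k)) u"
    unfolding ip_def by (rule infsum_cong) (auto simp: ten_def sum_distrib_right sum_distrib_left ac_simps intro!: sum.cong)
  finally show "ip (A \<times> {..<n}) z (ten u a n) = ip A (\<lambda>i. \<Sum>k<n. cnj (a k) * z (i,k)) u" .
qed



lemma mix_l2: fixes n :: nat assumes z: "z \<in> l2 (A \<times> {..<n})"
  shows "(\<lambda>i. \<Sum>k<n. c k * z (i,k)) \<in> l2 A"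
    and "l2norm A (\<lambda>i. \<Sum>k<n. c k * z (i,k)) \<le> (\<Sum>k<n. cmod (c k)) * l2norm (A \<times> {..<n}) z"
proof -
  define K where "K = (\<Sum>k<n. cmod (c k))"
  define r where "r = (\<lambda>i. \<Sum>k<n. (cmod (z (i,k)))^2)"
  have K0: "K \<ge> 0" by (simp add: K_def sum_nonneg)
  have sz: "(\<lambda>(i,k). (cmod (z (i,k)))^2) summable_on Sigma A (\<lambda>_. {..<n})"
    using l2_summ[OF z] by (simp add: case_prod_unfold)
  have sr: "r summable_on A"
    using summable_on_Sigma_banach[OF sz] by (simp add: r_def)
  have ir: "infsum r A = (l2norm (A \<times> {..<n}) z)^2"
    using infsum_Sigma'_banach[OF sz] by (simp add: r_def l2norm_sq case_prod_unfold)
  have pw: "(cmod (\<Sum>k<n. c k * z (i,k)))^2 \<le> K^2 * r i" for i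
  proof -
    have zr: "cmod (z (i,k)) \<le> sqrt (r i)" if "k < n" for k
    proof -
      have "(cmod (z (i,k)))^2 \<le> r i" unfolding r_def
        by (rule member_le_sum[where f="\<lambda>k. (cmod (z (i,k)))^2"]) (use that in auto)
      then show ?thesis by (simp add: real_le_rsqrt)
    qed
    have "cmod (\<Sum>k<n. c k * z (i,k)) \<le> (\<Sum>k<n. cmod (c k) * cmod (z (i,k)))"
      by (rule order_trans[OF norm_sum]) (simp add: norm_mult)
    also have "\<dots> \<le> (\<Sum>k<n. cmod (c k) * sqrt (r i))"
      by (intro sum_mono mult_left_mono zr) auto
    also have "\<dots> = K * sqrt (r i)" by (simp add: K_def sum_distrib_right)
    finally have "cmod (\<Sum>k<n. c k * z (i,k)) \<le> K * sqrt (r i)" .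
    then have "(cmod (\<Sum>k<n. c k * z (i,k)))^2 \<le> (K * sqrt (r i))^2"
      by (intro power_mono) auto
    also have "\<dots> = K^2 * r i" using K0 by (simp add: power_mult_distrib r_def sum_nonneg)
    finally show ?thesis .
  qed
  have vz: "(\<Sum>k<n. c k * z (i,k)) = 0" if "i \<notin> A" for i
    using that by (auto simp: l2_zero[OF z] intro!: sum.neutral)
  have sg: "(\<lambda>i. K^2 * r i) summable_on A" by (rule summable_on_cmult_right[OF sr])
  show "(\<lambda>i. \<Sum>k<n. c k * z (i,k)) \<in> l2 A" by (rule l2_dom(1)[OF vz sg pw])
  have "l2norm A (\<lambda>i. \<Sum>k<n. c k * z (i,k)) \<le> sqrt (infsum (\<lambda>i. K^2 * r i) A)"
    by (rule l2_dom(2)[OF vz sg pw])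
  also have "\<dots> = K * l2norm (A \<times> {..<n}) z"
    using K0 l2norm_nonneg[of "A \<times> {..<n}" z]
    by (simp add: infsum_cmult_right' ir real_sqrt_mult)
  finally show "l2norm A (\<lambda>i. \<Sum>k<n. c k * z (i,k)) \<le> (\<Sum>k<n. cmod (c k)) * l2norm (A \<times> {..<n}) z"
    by (simp add: K_def)
qed

definition blk :: "('a \<times> nat \<Rightarrow> 'a \<times> nat \<Rightarrow> complex) \<Rightarrow> nat \<Rightarrow> nat \<Rightarrow> 'a \<Rightarrow> 'a \<Rightarrow> complex" where
  "blk W k l = (\<lambda>i j. W (i,k) (j,l))"

lemma ampl_apply: "ampl n \<Phi> W (i,k) (j,l) = (if k < n \<and> l < n then \<Phi> (blk W k l) i j else 0)"
  by (simp add: ampl_def blk_def)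

lemma blk_tc: fixes n :: nat assumes W: "W \<in> trace_class (A \<times> {..<n})" and "k < n" "l < n"
  shows "blk W k l \<in> trace_class A"
proof -
  have "(\<lambda>t t'. if t \<in> A \<and> t' \<in> A then W (t,k) (t',l) else 0) \<in> trace_class A"
    by (rule tc_pull2[OF W]) (use assms in \<open>auto simp: inj_on_def\<close>)
  moreover have "(\<lambda>t t'. if t \<in> A \<and> t' \<in> A then W (t,k) (t',l) else 0) = blk W k l"
    by (intro ext) (auto simp: blk_def tc_vanish[OF W])
  ultimately show ?thesis by simp
qed

lemma qoD: assumes "quantum_operation A B \<Phi>"
  shows "\<And>M. M \<in> trace_class A \<Longrightarrow> \<Phi> M \<in> trace_class B"
    and "\<And>M N. M \<in> trace_class A \<Longrightarrow> N \<in> trace_class A \<Longrightarrow> \<Phi> (\<lambda>i j. M i j + N i j) = (\<lambda>i j. \<Phi> M i j + \<Phi> N i j)"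
    and "\<And>M c. M \<in> trace_class A \<Longrightarrow> \<Phi> (\<lambda>i j. c * M i j) = (\<lambda>i j. c * \<Phi> M i j)"
    and "\<And>n W. positive_tc (A \<times> {..<n}) W \<Longrightarrow> positive_tc (B \<times> {..<n}) (ampl n \<Phi> W)"
    and "\<And>M. positive_tc A M \<Longrightarrow> Re (trace B (\<Phi> M)) \<le> Re (trace A M)"
  using assms unfolding quantum_operation_def by blast+

lemma Phi_zero: assumes "quantum_operation A B \<Phi>" shows "\<Phi> (\<lambda>i j. 0) = (\<lambda>i j. 0)"
  using qoD(3)[OF assms tc_zero, of 0] by simp

lemma Phi_sum: assumes qo: "quantum_operation A B \<Phi>"
  shows "finite I \<Longrightarrow> (\<And>a. a \<in> I \<Longrightarrow> f a \<in> trace_class A) \<Longrightarrow>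
    \<Phi> (\<lambda>i j. \<Sum>a\<in>I. f a i j) = (\<lambda>i j. \<Sum>a\<in>I. \<Phi> (f a) i j)"
proof (induction I rule: finite_induct)
  case empty then show ?case using Phi_zero[OF qo] by simp
next
  case (insert a I)
  have "\<Phi> (\<lambda>i j. \<Sum>a\<in>insert a I. f a i j) = \<Phi> (\<lambda>i j. f a i j + (\<Sum>a\<in>I. f a i j))"
    using insert by simp
  also have "\<dots> = (\<lambda>i j. \<Phi> (f a) i j + \<Phi> (\<lambda>i j. \<Sum>a\<in>I. f a i j) i j)"
    using qoD(2)[OF qo, of "f a" "\<lambda>i j. \<Sum>a\<in>I. f a i j"] insert tc_sum[of I f A] by simp
  finally show ?case using insert by simp
qed

lemma trace_real: assumes "M \<in> trace_class S" "\<And>i. i \<in> S \<Longrightarrow> Im (M i i) = 0"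
  shows "Im (trace S M) = 0"
proof -
  have "Im (trace S M) = infsum (\<lambda>i. Im (M i i)) S"
    unfolding trace_def by (rule infsum_Im[OF tc_diag[OF assms(1)], symmetric])
  also have "\<dots> = 0" using assms(2) by (simp add: infsum_0)
  finally show ?thesis .
qed

lemma diag_form: fixes n :: nat assumes Z: "positive_tc (X \<times> {..<n}) Z" and i: "i \<in> X"
  shows "Im (\<Sum>k<n. \<Sum>l<n. cnj (a k) * a l * Z (i,k) (i,l)) = 0"
    and "Re (\<Sum>k<n. \<Sum>l<n. cnj (a k) * a l * Z (i,k) (i,l)) \<ge> 0"
proof -
  define e where "e = (\<lambda>p. if fst p = i \<and> snd p < n then a (snd p) else 0)"
  define F where "F = (\<lambda>k. (i,k)) ` {..<n}"
  have F: "finite F" "F \<subseteq> X \<times> {..<n}" "\<And>p. p \<notin> F \<Longrightarrow> e p = 0"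
    using i by (auto simp: F_def e_def image_iff intro: prod_eqI)
  have el2: "e \<in> l2 (X \<times> {..<n})" by (rule l2_fin(1)[OF F])
  have inj: "inj_on (\<lambda>k. (i,k)) {..<n}" by (auto simp: inj_on_def)
  have "qform (X \<times> {..<n}) Z e = (\<Sum>p\<in>F. cnj (e p) * (\<Sum>q\<in>F. Z p q * e q))"
    by (rule qform_fin[OF F])
  also have "\<dots> = (\<Sum>k<n. cnj (a k) * (\<Sum>l<n. Z (i,k) (i,l) * a l))"
    unfolding F_def by (simp add: sum.reindex[OF inj] e_def)
  also have "\<dots> = (\<Sum>k<n. \<Sum>l<n. cnj (a k) * a l * Z (i,k) (i,l))"
    by (simp add: sum_distrib_left ac_simps)
  finally have q: "qform (X \<times> {..<n}) Z e = (\<Sum>k<n. \<Sum>l<n. cnj (a k) * a l * Z (i,k) (i,l))" .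
  show "Im (\<Sum>k<n. \<Sum>l<n. cnj (a k) * a l * Z (i,k) (i,l)) = 0"
    using Z el2 q by (auto simp: positive_tc_def)
  show "Re (\<Sum>k<n. \<Sum>l<n. cnj (a k) * a l * Z (i,k) (i,l)) \<ge> 0"
    using Z el2 q by (auto simp: positive_tc_def)
qed



definition wmix :: "('a \<times> nat \<Rightarrow> 'a \<times> nat \<Rightarrow> complex) \<Rightarrow> (nat \<Rightarrow> complex) \<Rightarrow> nat \<Rightarrow> 'a \<Rightarrow> 'a \<Rightarrow> complex" where
  "wmix W a n = (\<lambda>i j. \<Sum>k<n. \<Sum>l<n. cnj (a k) * a l * W (i,k) (j,l))"

lemma wmix_alt: "wmix W a n = (\<lambda>i j. \<Sum>k<n. \<Sum>l<n. cnj (a k) * a l * blk W k l i j)"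
  by (simp add: wmix_def blk_def)

lemma tc_row: fixes n :: nat assumes W: "W \<in> trace_class (A \<times> {..<n})" and k: "k < n"
  shows "(\<lambda>i j. \<Sum>l<n. cnj (a k) * a l * blk W k l i j) \<in> trace_class A"
proof (rule tc_sum)
  fix l assume "l \<in> {..<n}"
  then show "(\<lambda>i j. cnj (a k) * a l * blk W k l i j) \<in> trace_class A"
    by (intro tc_scale blk_tc[OF W k]) auto
qed simp

lemma wmix_tc: fixes n :: nat assumes W: "W \<in> trace_class (A \<times> {..<n})"
  shows "wmix W a n \<in> trace_class A"
  unfolding wmix_alt
proof (rule tc_sum)
  fix k assume "k \<in> {..<n}"
  then show "(\<lambda>i j. \<Sum>l<n. cnj (a k) * a l * blk W k l i j) \<in> trace_class A"
    by (intro tc_row[OF W]) auto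
qed simp

lemma wmix_pos: fixes n :: nat assumes Wp: "positive_tc (A \<times> {..<n}) W"
  shows "positive_tc A (wmix W a n)"
proof -
  have W: "W \<in> trace_class (A \<times> {..<n})" using Wp by (simp add: positive_tc_def)
  obtain x y where nr: "nuclear_rep (A \<times> {..<n}) x y" and Wx: "W = rep_op x y"
    using W by (auto simp: trace_class_def)
  define x' where "x' = (\<lambda>m i. \<Sum>k<n. cnj (a k) * x m (i,k))"
  define y' where "y' = (\<lambda>m j. \<Sum>l<n. cnj (a l) * y m (j,l))"
  define K where "K = (\<Sum>k<n. cmod (cnj (a k)))"
  have K0: "K \<ge> 0" by (simp add: K_def sum_nonneg)
  have lx: "x' m \<in> l2 A" "l2norm A (x' m) \<le> K * l2norm (A \<times> {..<n}) (x m)" for m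
    unfolding x'_def K_def by (intro mix_l2 nrD[OF nr])+
  have ly: "y' m \<in> l2 A" "l2norm A (y' m) \<le> K * l2norm (A \<times> {..<n}) (y m)" for m
    unfolding y'_def K_def by (intro mix_l2 nrD[OF nr])+
  have le: "l2norm A (x' m) * l2norm A (y' m) \<le> K^2 * (l2norm (A \<times> {..<n}) (x m) * l2norm (A \<times> {..<n}) (y m))" for m
  proof -
    have "l2norm A (x' m) * l2norm A (y' m) \<le> (K * l2norm (A \<times> {..<n}) (x m)) * (K * l2norm (A \<times> {..<n}) (y m))"
      by (intro mult_mono lx ly l2norm_nonneg mult_nonneg_nonneg K0)
    then show ?thesis by (simp add: power2_eq_square ac_simps)
  qed
  have nr': "nuclear_rep A x' y'"
    unfolding nuclear_rep_def
  proof (intro conjI allI)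
    show "summable (\<lambda>k. l2norm A (x' k) * l2norm A (y' k))"
      by (rule summable_comparison_test[OF _ summable_mult[OF nrD(3)[OF nr], of "K^2"]])
         (use le in \<open>auto simp: abs_mult l2norm_nonneg\<close>)
  qed (use lx ly in auto)
  have rep': "wmix W a n = rep_op x' y'"
  proof (intro ext)
    fix i j
    define t where "t = (\<lambda>k l m. x m (i,k) * cnj (y m (j,l)))"
    have st': "summable (t k l)" for k l
      unfolding t_def by (rule summable_norm_cancel[OF nr_coef_summable[OF nr]])
    have pt: "x' m i * cnj (y' m j) = (\<Sum>k<n. \<Sum>l<n. cnj (a k) * a l * t k l m)" for m
      by (simp add: x'_def y'_def t_def sum_product ac_simps, rule sum.swap)
    have "rep_op x' y' i j = (\<Sum>m. \<Sum>k<n. \<Sum>l<n. cnj (a k) * a l * t k l m)"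
      by (simp add: rep_op_def pt)
    also have "\<dots> = (\<Sum>k<n. \<Sum>m. \<Sum>l<n. cnj (a k) * a l * t k l m)"
      by (rule suminf_sum) (intro summable_sum summable_mult st')
    also have "\<dots> = (\<Sum>k<n. \<Sum>l<n. \<Sum>m. cnj (a k) * a l * t k l m)"
      by (intro sum.cong refl suminf_sum summable_mult st')
    also have "\<dots> = (\<Sum>k<n. \<Sum>l<n. cnj (a k) * a l * W (i,k) (j,l))"
      by (intro sum.cong refl) (subst suminf_mult[OF st'], simp add: Wx rep_op_def t_def)
    finally show "wmix W a n i j = rep_op x' y' i j" by (simp add: wmix_def)
  qed
  have qf: "qform A (wmix W a n) u = qform (A \<times> {..<n}) W (ten u a n)" if u: "u \<in> l2 A" for u
  proof -
    have "qform A (wmix W a n) u = (\<Sum>m. ip A u (x' m) * ip A (y' m) u)"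
      unfolding rep' by (rule qform_rep(2)[OF nr' u])
    also have "\<dots> = (\<Sum>m. ip (A \<times> {..<n}) (ten u a n) (x m) * ip (A \<times> {..<n}) (y m) (ten u a n))"
      unfolding x'_def y'_def using ip_ten[OF u nrD(1)[OF nr]] ip_ten[OF u nrD(2)[OF nr]] by simp
    also have "\<dots> = qform (A \<times> {..<n}) W (ten u a n)"
      unfolding Wx by (rule qform_rep(2)[OF nr l2_ten[OF u], symmetric])
    finally show ?thesis .
  qed
  show ?thesis
    unfolding positive_tc_def
  proof (intro conjI ballI)
    show "wmix W a n \<in> trace_class A" by (rule wmix_tc[OF W])
    fix u assume u: "u \<in> l2 A"
    show "Im (qform A (wmix W a n) u) = 0" "0 \<le> Re (qform A (wmix W a n) u)"
      using Wp l2_ten[OF u] unfolding qf[OF u] positive_tc_def by auto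
  qed
qed

lemma Tpsd: fixes n :: nat
  assumes qo: "quantum_operation A B \<Phi>" and Wp: "positive_tc (A \<times> {..<n}) W"
  shows "Im (\<Sum>k<n. \<Sum>l<n. cnj (a k) * a l * (trace A (blk W k l) - trace B (\<Phi> (blk W k l)))) = 0"
    and "Re (\<Sum>k<n. \<Sum>l<n. cnj (a k) * a l * (trace A (blk W k l) - trace B (\<Phi> (blk W k l)))) \<ge> 0"
proof -
  have W: "W \<in> trace_class (A \<times> {..<n})" using Wp by (simp add: positive_tc_def)
  have bt: "k < n \<Longrightarrow> l < n \<Longrightarrow> blk W k l \<in> trace_class A" for k l by (rule blk_tc[OF W])
  have pbt: "k < n \<Longrightarrow> l < n \<Longrightarrow> \<Phi> (blk W k l) \<in> trace_class B" for k l by (rule qoD(1)[OF qo bt])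
  have t1: "trace A (wmix W a n) = (\<Sum>k<n. \<Sum>l<n. cnj (a k) * a l * trace A (blk W k l))"
  proof -
    have "trace A (wmix W a n) = (\<Sum>k<n. trace A (\<lambda>i j. \<Sum>l<n. cnj (a k) * a l * blk W k l i j))"
      unfolding wmix_alt by (rule trace_sum) (auto intro: tc_row[OF W])
    also have "\<dots> = (\<Sum>k<n. \<Sum>l<n. cnj (a k) * a l * trace A (blk W k l))"
    proof (rule sum.cong[OF refl])
      fix k assume k: "k \<in> {..<n}"
      have "trace A (\<lambda>i j. \<Sum>l<n. cnj (a k) * a l * blk W k l i j) = (\<Sum>l<n. trace A (\<lambda>i j. cnj (a k) * a l * blk W k l i j))"
        by (rule trace_sum) (use k in \<open>auto intro!: tc_scale bt\<close>)
      then show "trace A (\<lambda>i j. \<Sum>l<n. cnj (a k) * a l * blk W k l i j) = (\<Sum>l<n. cnj (a k) * a l * trace A (blk W k l))"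
        by (simp add: trace_scale)
    qed
    finally show ?thesis .
  qed
  have phw: "\<Phi> (wmix W a n) = (\<lambda>i j. \<Sum>k<n. \<Sum>l<n. cnj (a k) * a l * \<Phi> (blk W k l) i j)"
  proof -
    have "\<Phi> (wmix W a n) = (\<lambda>i j. \<Sum>k<n. \<Phi> (\<lambda>i j. \<Sum>l<n. cnj (a k) * a l * blk W k l i j) i j)"
      unfolding wmix_alt by (rule Phi_sum[OF qo]) (auto intro: tc_row[OF W])
    also have "\<dots> = (\<lambda>i j. \<Sum>k<n. \<Sum>l<n. cnj (a k) * a l * \<Phi> (blk W k l) i j)"
    proof (intro ext sum.cong[OF refl])
      fix i j k assume k: "k \<in> {..<n}"
      have "\<Phi> (\<lambda>i j. \<Sum>l<n. cnj (a k) * a l * blk W k l i j) = (\<lambda>i j. \<Sum>l<n. \<Phi> (\<lambda>i j. cnj (a k) * a l * blk W k l i j) i j)"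
        by (rule Phi_sum[OF qo]) (use k in \<open>auto intro!: tc_scale bt\<close>)
      also have "\<dots> = (\<lambda>i j. \<Sum>l<n. cnj (a k) * a l * \<Phi> (blk W k l) i j)"
        by (intro ext sum.cong refl) (use k in \<open>simp add: qoD(3)[OF qo bt]\<close>)
      finally show "\<Phi> (\<lambda>i j. \<Sum>l<n. cnj (a k) * a l * blk W k l i j) i j = (\<Sum>l<n. cnj (a k) * a l * \<Phi> (blk W k l) i j)"
        by simp
    qed
    finally show ?thesis .
  qed
  have tc_row2: "(\<lambda>i j. \<Sum>l<n. cnj (a k) * a l * \<Phi> (blk W k l) i j) \<in> trace_class B" if k: "k < n" for k
  proof (rule tc_sum)
    fix l assume "l \<in> {..<n}"
    then show "(\<lambda>i j. cnj (a k) * a l * \<Phi> (blk W k l) i j) \<in> trace_class B"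
      by (intro tc_scale pbt k) auto
  qed simp
  have t2: "trace B (\<Phi> (wmix W a n)) = (\<Sum>k<n. \<Sum>l<n. cnj (a k) * a l * trace B (\<Phi> (blk W k l)))"
  proof -
    have "trace B (\<Phi> (wmix W a n)) = (\<Sum>k<n. trace B (\<lambda>i j. \<Sum>l<n. cnj (a k) * a l * \<Phi> (blk W k l) i j))"
      unfolding phw by (rule trace_sum) (auto intro: tc_row2)
    also have "\<dots> = (\<Sum>k<n. \<Sum>l<n. cnj (a k) * a l * trace B (\<Phi> (blk W k l)))"
    proof (rule sum.cong[OF refl])
      fix k assume k: "k \<in> {..<n}"
      have "trace B (\<lambda>i j. \<Sum>l<n. cnj (a k) * a l * \<Phi> (blk W k l) i j) = (\<Sum>l<n. trace B (\<lambda>i j. cnj (a k) * a l * \<Phi> (blk W k l) i j))"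
        by (rule trace_sum) (use k in \<open>auto intro!: tc_scale pbt\<close>)
      then show "trace B (\<lambda>i j. \<Sum>l<n. cnj (a k) * a l * \<Phi> (blk W k l) i j) = (\<Sum>l<n. cnj (a k) * a l * trace B (\<Phi> (blk W k l)))"
        by (simp add: trace_scale)
    qed
    finally show ?thesis .
  qed
  have Q: "(\<Sum>k<n. \<Sum>l<n. cnj (a k) * a l * (trace A (blk W k l) - trace B (\<Phi> (blk W k l))))
     = trace A (wmix W a n) - trace B (\<Phi> (wmix W a n))"
    unfolding t1 t2 by (simp add: right_diff_distrib sum_subtractf)
  have im1: "Im (trace A (wmix W a n)) = 0"
  proof (rule trace_real[OF wmix_tc[OF W]])
    fix i assume "i \<in> A"
    then show "Im (wmix W a n i i) = 0" unfolding wmix_def by (rule diag_form(1)[OF Wp])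
  qed
  have Ap: "positive_tc (B \<times> {..<n}) (ampl n \<Phi> W)" by (rule qoD(4)[OF qo Wp])
  have im2: "Im (trace B (\<Phi> (wmix W a n))) = 0"
  proof (rule trace_real[OF qoD(1)[OF qo wmix_tc[OF W]]])
    fix i assume i: "i \<in> B"
    have "\<Phi> (wmix W a n) i i = (\<Sum>k<n. \<Sum>l<n. cnj (a k) * a l * ampl n \<Phi> W (i,k) (i,l))"
      unfolding phw by (simp add: ampl_apply)
    then show "Im (\<Phi> (wmix W a n) i i) = 0" using diag_form(1)[OF Ap i] by simp
  qed
  have re: "Re (trace B (\<Phi> (wmix W a n))) \<le> Re (trace A (wmix W a n))"
    by (rule qoD(5)[OF qo wmix_pos[OF Wp]])
  show "Im (\<Sum>k<n. \<Sum>l<n. cnj (a k) * a l * (trace A (blk W k l) - trace B (\<Phi> (blk W k l)))) = 0"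
    unfolding Q using im1 im2 by simp
  show "Re (\<Sum>k<n. \<Sum>l<n. cnj (a k) * a l * (trace A (blk W k l) - trace B (\<Phi> (blk W k l)))) \<ge> 0"
    unfolding Q using re by simp
qed



definition SB :: "'b set \<Rightarrow> ('b + nat) set" where "SB B = Inl ` B \<union> Inr ` {0}"

definition Psi :: "'a set \<Rightarrow> 'b set \<Rightarrow> (('a \<Rightarrow> 'a \<Rightarrow> complex) \<Rightarrow> ('b \<Rightarrow> 'b \<Rightarrow> complex))
   \<Rightarrow> ('a \<Rightarrow> 'a \<Rightarrow> complex) \<Rightarrow> ('b + nat \<Rightarrow> 'b + nat \<Rightarrow> complex)" where
  "Psi A B \<Phi> M = (\<lambda>p q. case p of Inl i \<Rightarrow> (case q of Inl j \<Rightarrow> \<Phi> M i j | Inr _ \<Rightarrow> 0)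
      | Inr a \<Rightarrow> (case q of Inl _ \<Rightarrow> 0 | Inr b \<Rightarrow> if a = 0 \<and> b = 0 then trace A M - trace B (\<Phi> M) else 0))"

definition PushL :: "'b set \<Rightarrow> ('b \<Rightarrow> 'b \<Rightarrow> complex) \<Rightarrow> ('b + nat \<Rightarrow> 'b + nat \<Rightarrow> complex)" where
  "PushL B N = (\<lambda>s s'. if s \<in> Inl ` B \<and> s' \<in> Inl ` B then N (the_inv_into B Inl s) (the_inv_into B Inl s') else 0)"

lemma PushL_apply: "PushL B N p q = (case p of Inl i \<Rightarrow> (case q of Inl j \<Rightarrow> if i \<in> B \<and> j \<in> B then N i j else 0 | Inr _ \<Rightarrow> 0) | Inr _ \<Rightarrow> 0)"
  by (auto simp: PushL_def the_inv_into_f_f split: sum.splits)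

lemma PushL_tc: assumes "N \<in> trace_class B"
  shows "PushL B N \<in> trace_class (SB B)" "trace_norm (SB B) (PushL B N) \<le> trace_norm B N"
  unfolding PushL_def using tc_push[OF assms, of Inl "SB B"] by (auto simp: SB_def)

lemma Psi_decomp: assumes "\<Phi> M \<in> trace_class B"
  shows "Psi A B \<Phi> M = (\<lambda>p q. PushL B (\<Phi> M) p q + Emat (Inr 0) (Inr 0) (trace A M - trace B (\<Phi> M)) p q)"
  by (intro ext) (auto simp: Psi_def PushL_apply Emat_def tc_vanish[OF assms] split: sum.splits)

lemma Psi_tc: assumes "\<Phi> M \<in> trace_class B"
  shows "Psi A B \<Phi> M \<in> trace_class (SB B)"
  unfolding Psi_decomp[where \<Phi>=\<Phi> and M=M, OF assms]
  by (intro tc_add PushL_tc(1)[OF assms] tc_Emat) (auto simp: SB_def)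

lemma Psi_trace: assumes N: "\<Phi> M \<in> trace_class B"
  shows "trace (SB B) (Psi A B \<Phi> M) = trace A M"
proof -
  let ?f = "\<lambda>p. Psi A B \<Phi> M p p"
  have fi: "(?f \<circ> Inl) = (\<lambda>i. \<Phi> M i i)" by (auto simp: Psi_def)
  have s1: "?f summable_on (Inl ` B)"
    using summable_on_reindex[of Inl B ?f] tc_diag[OF N] fi by simp
  have "trace (SB B) (Psi A B \<Phi> M) = infsum ?f (Inl ` B) + infsum ?f (Inr ` {0})"
    unfolding trace_def SB_def by (rule infsum_Un_disjoint[OF s1]) auto
  also have "infsum ?f (Inl ` B) = trace B (\<Phi> M)"
    using infsum_reindex[of Inl B ?f] fi by (simp add: trace_def)
  also have "infsum ?f (Inr ` {0}) = trace A M - trace B (\<Phi> M)" by (simp add: Psi_def)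
  finally show ?thesis by simp
qed

lemma Psi_add: assumes qo: "quantum_operation A B \<Phi>" and M: "M \<in> trace_class A" and N: "N \<in> trace_class A"
  shows "Psi A B \<Phi> (\<lambda>i j. M i j + N i j) = (\<lambda>i j. Psi A B \<Phi> M i j + Psi A B \<Phi> N i j)"
proof -
  have e: "\<Phi> (\<lambda>i j. M i j + N i j) = (\<lambda>i j. \<Phi> M i j + \<Phi> N i j)" by (rule qoD(2)[OF qo M N])
  have t1: "trace A (\<lambda>i j. M i j + N i j) = trace A M + trace A N" by (rule trace_add[OF M N])
  have t2: "trace B (\<lambda>i j. \<Phi> M i j + \<Phi> N i j) = trace B (\<Phi> M) + trace B (\<Phi> N)"
    by (rule trace_add[OF qoD(1)[OF qo M] qoD(1)[OF qo N]])
  show ?thesis by (intro ext) (auto simp: Psi_def e t1 t2 split: sum.splits)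
qed

lemma Psi_scale: assumes qo: "quantum_operation A B \<Phi>" and M: "M \<in> trace_class A"
  shows "Psi A B \<Phi> (\<lambda>i j. c * M i j) = (\<lambda>i j. c * Psi A B \<Phi> M i j)"
proof -
  have e: "\<Phi> (\<lambda>i j. c * M i j) = (\<lambda>i j. c * \<Phi> M i j)" by (rule qoD(3)[OF qo M])
  show ?thesis by (intro ext) (auto simp: Psi_def e trace_scale right_diff_distrib split: sum.splits)
qed

lemma Psi_conv: assumes qn: "quantum_operation A B \<Phi>n" and q0: "quantum_operation A B \<Phi>0"
  and r: "\<rho> \<in> trace_class A"
  shows "trace_norm (SB B) (\<lambda>i j. Psi A B \<Phi>n \<rho> i j - Psi A B \<Phi>0 \<rho> i j)
     \<le> 2 * trace_norm B (\<lambda>i j. \<Phi>n \<rho> i j - \<Phi>0 \<rho> i j)"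
proof -
  have Nn: "\<Phi>n \<rho> \<in> trace_class B" by (rule qoD(1)[OF qn r])
  have N0: "\<Phi>0 \<rho> \<in> trace_class B" by (rule qoD(1)[OF q0 r])
  define D where "D = (\<lambda>i j. \<Phi>n \<rho> i j - \<Phi>0 \<rho> i j)"
  have D: "D \<in> trace_class B" unfolding D_def by (rule tc_diff[OF Nn N0])
  define c where "c = (trace A \<rho> - trace B (\<Phi>n \<rho>)) - (trace A \<rho> - trace B (\<Phi>0 \<rho>))"
  have c: "c = - trace B D" unfolding c_def D_def trace_diff[OF Nn N0] by simp
  have e: "(\<lambda>i j. Psi A B \<Phi>n \<rho> i j - Psi A B \<Phi>0 \<rho> i j) = (\<lambda>i j. PushL B D i j + Emat (Inr 0) (Inr 0) c i j)"
    unfolding Psi_decomp[where \<Phi>=\<Phi>n and M=\<rho>, OF Nn] Psi_decomp[where \<Phi>=\<Phi>0 and M=\<rho>, OF N0]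
    by (intro ext) (auto simp: PushL_apply Emat_def D_def c_def split: sum.splits)
  have "trace_norm (SB B) (\<lambda>i j. PushL B D i j + Emat (Inr 0) (Inr 0) c i j)
      \<le> trace_norm (SB B) (PushL B D) + trace_norm (SB B) (Emat (Inr 0) (Inr 0) c)"
    by (rule tn_triangle[OF PushL_tc(1)[OF D] tc_Emat(1)]) (auto simp: SB_def)
  also have "\<dots> \<le> trace_norm B D + cmod c"
    by (intro add_mono PushL_tc(2)[OF D] tc_Emat(2)) (auto simp: SB_def)
  also have "cmod c \<le> trace_norm B D" unfolding c using trace_le_tn[OF D] by simp
  finally show ?thesis unfolding e D_def by simp
qed

lemma M2_eval: "(\<Sum>k'<n. \<Sum>l'<n. Emat (Inr 0, k') (Inr 0, l') (c k' l') (p,k) (q,l)) =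
   (if p = Inr 0 \<and> q = Inr 0 \<and> k < (n::nat) \<and> l < n then c k l else 0)"
proof (cases "p = Inr 0 \<and> q = Inr 0")
  case True
  then have "(\<Sum>k'<n. \<Sum>l'<n. Emat (Inr 0, k') (Inr 0, l') (c k' l') (p,k) (q,l)) =
     (\<Sum>k'<n. if k' = k then (\<Sum>l'<n. if l' = l then c k' l' else 0) else 0)"
    by (intro sum.cong refl) (auto simp: Emat_def)
  then show ?thesis using True by simp
next
  case False then show ?thesis by (auto simp: Emat_def)
qed



lemma Psi_CP: fixes n :: nat
  assumes qo: "quantum_operation A B \<Phi>" and Wp: "positive_tc (A \<times> {..<n}) W"
  shows "positive_tc (SB B \<times> {..<n}) (ampl n (Psi A B \<Phi>) W)"
proof -
  have W: "W \<in> trace_class (A \<times> {..<n})" using Wp by (simp add: positive_tc_def)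
  define Ap where "Ap = ampl n \<Phi> W"
  have Ap_pos: "positive_tc (B \<times> {..<n}) Ap" unfolding Ap_def by (rule qoD(4)[OF qo Wp])
  have Ap_tc: "Ap \<in> trace_class (B \<times> {..<n})" using Ap_pos by (simp add: positive_tc_def)
  define Tm where "Tm = (\<lambda>k l. trace A (blk W k l) - trace B (\<Phi> (blk W k l)))"
  have pbt: "k < n \<Longrightarrow> l < n \<Longrightarrow> \<Phi> (blk W k l) \<in> trace_class B" for k l
    by (rule qoD(1)[OF qo blk_tc[OF W]])
  define Mx where "Mx = ampl n (Psi A B \<Phi>) W"
  have mx: "Mx (p,k) (q,l) = (case p of Inl b \<Rightarrow> (case q of Inl b' \<Rightarrow> Ap (b,k) (b',l) | Inr _ \<Rightarrow> 0)
      | Inr a \<Rightarrow> (case q of Inl _ \<Rightarrow> 0 | Inr a' \<Rightarrow> if a = 0 \<and> a' = 0 \<and> k < n \<and> l < n then Tm k l else 0))" for p k q l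
    by (auto simp: Mx_def Ap_def ampl_apply Psi_def Tm_def split: sum.splits)
  define g where "g = (\<lambda>(b::'b, k::nat). (Inl b :: 'b + nat, k))"
  define T where "T = B \<times> {..<n}"
  define S where "S = SB B \<times> {..<n}"
  have ginj: "inj_on g T" by (auto simp: inj_on_def g_def)
  have gT: "g ` T \<subseteq> S" by (auto simp: g_def T_def S_def SB_def)
  have gmem: "(Inl b, k) \<in> g ` T \<longleftrightarrow> b \<in> B \<and> k < n" for b k
    by (auto simp: g_def T_def image_iff)
  have ginv: "b \<in> B \<Longrightarrow> k < n \<Longrightarrow> the_inv_into T g (Inl b, k) = (b,k)" for b k
    using the_inv_into_f_f[OF ginj, of "(b,k)"] by (simp add: g_def T_def)
  define M1 where "M1 = (\<lambda>s s'. if s \<in> g ` T \<and> s' \<in> g ` T then Ap (the_inv_into T g s) (the_inv_into T g s') else 0)"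
  define M2 where "M2 = (\<lambda>s s'. \<Sum>k<n. \<Sum>l<n. Emat (Inr 0 :: 'b + nat, k) (Inr 0, l) (Tm k l) s s')"
  have M1_tc: "M1 \<in> trace_class S"
    unfolding M1_def by (rule tc_push(1)[OF Ap_tc[folded T_def] ginj gT])
  have M2_tc: "M2 \<in> trace_class S"
    unfolding M2_def
  proof (rule tc_sum)
    fix k assume k: "k \<in> {..<n}"
    show "(\<lambda>s s'. \<Sum>l<n. Emat (Inr 0, k) (Inr 0, l) (Tm k l) s s') \<in> trace_class S"
    proof (rule tc_sum)
      fix l assume l: "l \<in> {..<n}"
      show "Emat (Inr 0, k) (Inr 0, l) (Tm k l) \<in> trace_class S"
        by (rule tc_Emat(1)) (use k l in \<open>auto simp: S_def SB_def\<close>)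
    qed simp
  qed simp
  have dec: "Mx = (\<lambda>s s'. M1 s s' + M2 s s')"
  proof (intro ext)
    fix s s' :: "('b + nat) \<times> nat"
    obtain p k where s: "s = (p,k)" by (cases s)
    obtain q l where s': "s' = (q,l)" by (cases s')
    have Ap0: "Ap (b,k) (b',l) = 0" if "\<not> (b \<in> B \<and> k < n \<and> b' \<in> B \<and> l < n)" for b b'
    proof (cases "k < n \<and> l < n")
      case True
      then show ?thesis using that by (auto simp: Ap_def ampl_apply tc_vanish[OF pbt])
    qed (auto simp: Ap_def ampl_apply)
    have gmemr: "(Inr a, kk) \<notin> g ` T" for a kk by (auto simp: g_def)
    show "Mx s s' = M1 s s' + M2 s s'"
      unfolding s s' mx M2_def M2_eval
      by (cases p; cases q) (simp_all add: M1_def gmem gmemr ginv Ap0)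
  qed
  have Mx_tc: "Mx \<in> trace_class S" unfolding dec by (rule tc_add[OF M1_tc M2_tc])
  have qf: "Im (qform S Mx v) = 0 \<and> Re (qform S Mx v) \<ge> 0" if v: "v \<in> l2 S" for v
  proof -
    define f where "f = (\<lambda>p. cnj (v p) * infsum (\<lambda>q. Mx p q * v q) S)"
    define P1 where "P1 = g ` T"
    define P2 where "P2 = (\<lambda>k. (Inr 0 :: 'b + nat, k)) ` {..<n}"
    have SU: "S = P1 \<union> P2"
      by (auto simp: S_def SB_def P1_def P2_def g_def T_def image_iff)
    have disj: "P1 \<inter> P2 = {}" by (auto simp: P1_def P2_def g_def)
    have fin2: "finite P2" by (simp add: P2_def)
    have q: "qform S Mx v = infsum f S" by (simp add: qform_def f_def)
    show ?thesis
    proof (cases "f summable_on P1")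
      case False
      then have "\<not> f summable_on S" using summable_on_subset_banach[of f S P1] SU by blast
      then show ?thesis using q by (simp add: infsum_not_exists)
    next
      case True
      have split: "infsum f S = infsum f P1 + infsum f P2"
        unfolding SU by (rule infsum_Un_disjoint[OF True _ disj]) (simp add: fin2)
      define w where "w = (\<lambda>t. if t \<in> T then v (g t) else 0)"
      have w: "w \<in> l2 T" unfolding w_def by (rule l2_pull(1)[OF v ginj gT])
      have c1: "infsum f P1 = qform T Ap w"
      proof -
        have "infsum f P1 = infsum (f \<circ> g) T" unfolding P1_def by (rule infsum_reindex[OF ginj])
        also have "\<dots> = infsum (\<lambda>t. cnj (w t) * infsum (\<lambda>t'. Ap t t' * w t') T) T"
        proof (rule infsum_cong)
          fix t assume t: "t \<in> T"
          obtain b k where tb: "t = (b,k)" by (cases t)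
          have "infsum (\<lambda>q. Mx (g t) q * v q) S = infsum (\<lambda>q. Mx (g t) q * v q) P1"
          proof (rule infsum_cong_neutral)
            fix q assume "q \<in> S - P1"
            then have "q \<in> P2" using SU by auto
            then show "Mx (g t) q * v q = 0" by (auto simp: P2_def g_def tb mx)
          qed (use SU in auto)
          also have "\<dots> = infsum ((\<lambda>q. Mx (g t) q * v q) \<circ> g) T"
            unfolding P1_def by (rule infsum_reindex[OF ginj])
          also have "\<dots> = infsum (\<lambda>t'. Ap t t' * w t') T"
            by (rule infsum_cong) (auto simp: w_def g_def tb mx)
          finally show "(f \<circ> g) t = cnj (w t) * infsum (\<lambda>t'. Ap t t' * w t') T"
            using t by (simp add: f_def w_def)
        qed
        also have "\<dots> = qform T Ap w" by (simp add: qform_def)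
        finally show ?thesis .
      qed
      define a where "a = (\<lambda>k. v (Inr 0, k))"
      have c2: "infsum f P2 = (\<Sum>k<n. \<Sum>l<n. cnj (a k) * a l * Tm k l)"
      proof -
        have inj2: "inj_on (\<lambda>k. (Inr 0 :: 'b + nat, k)) {..<n}" by (auto simp: inj_on_def)
        have fk: "f (Inr 0, k) = (\<Sum>l<n. cnj (a k) * a l * Tm k l)" if k: "k < n" for k
        proof -
          have "infsum (\<lambda>q. Mx (Inr 0, k) q * v q) S = infsum (\<lambda>q. Mx (Inr 0, k) q * v q) P2"
          proof (rule infsum_cong_neutral)
            fix q assume "q \<in> S - P2"
            then have "q \<in> P1" using SU by auto
            then show "Mx (Inr 0, k) q * v q = 0" by (auto simp: P1_def g_def mx)
          qed (use SU in auto)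
          also have "\<dots> = (\<Sum>l<n. Mx (Inr 0, k) (Inr 0, l) * v (Inr 0, l))"
            unfolding P2_def by (simp add: sum.reindex[OF inj2])
          also have "\<dots> = (\<Sum>l<n. Tm k l * a l)"
            by (intro sum.cong refl) (use k in \<open>simp add: mx a_def\<close>)
          finally show ?thesis by (simp add: f_def a_def sum_distrib_left ac_simps)
        qed
        have "infsum f P2 = sum f P2" by (simp add: fin2)
        also have "\<dots> = (\<Sum>k<n. f (Inr 0, k))" unfolding P2_def by (simp add: sum.reindex[OF inj2])
        also have "\<dots> = (\<Sum>k<n. \<Sum>l<n. cnj (a k) * a l * Tm k l)"
          by (intro sum.cong refl) (simp add: fk)
        finally show ?thesis .
      qed
      have A1: "Im (qform T Ap w) = 0" "Re (qform T Ap w) \<ge> 0"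
        using Ap_pos w by (auto simp: positive_tc_def T_def)
      have A2: "Im (\<Sum>k<n. \<Sum>l<n. cnj (a k) * a l * Tm k l) = 0" "Re (\<Sum>k<n. \<Sum>l<n. cnj (a k) * a l * Tm k l) \<ge> 0"
        unfolding Tm_def by (rule Tpsd(1)[OF qo Wp], rule Tpsd(2)[OF qo Wp])
      show ?thesis using A1 A2 unfolding q split c1 c2 by simp
    qed
  qed
  show ?thesis
    unfolding positive_tc_def using Mx_tc qf by (simp add: Mx_def S_def)
qed



lemma restr_tn: assumes D: "D \<in> trace_class (Inl ` B \<union> Inr ` C)"
  shows "(\<lambda>i j. D (Inl i) (Inl j)) \<in> trace_class B"
    and "trace_norm B (\<lambda>i j. D (Inl i) (Inl j)) \<le> trace_norm (Inl ` B \<union> Inr ` C) D"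
proof -
  have z: "D (Inl t) (Inl t') = 0" if "t \<notin> B \<or> t' \<notin> B" for t t'
    by (rule tc_vanish[OF D]) (use that in auto)
  have e: "(\<lambda>t t'. if t \<in> B \<and> t' \<in> B then D (Inl t) (Inl t') else 0) = (\<lambda>i j. D (Inl i) (Inl j))"
    by (intro ext) (auto simp: z)
  have i: "inj_on Inl B" "Inl ` B \<subseteq> Inl ` B \<union> Inr ` C" by auto
  show "(\<lambda>i j. D (Inl i) (Inl j)) \<in> trace_class B" using tc_pull(1)[OF D i] e by simp
  show "trace_norm B (\<lambda>i j. D (Inl i) (Inl j)) \<le> trace_norm (Inl ` B \<union> Inr ` C) D"
    using tc_pull(2)[OF D i] e by simp
qed

lemma density_tc: "\<rho> \<in> density_ops A \<Longrightarrow> \<rho> \<in> trace_class A"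
  by (simp add: density_ops_def positive_tc_def)

lemma Psi_channel: assumes qo: "quantum_operation A B \<Phi>"
  shows "quantum_channel A (SB B) (Psi A B \<Phi>)"
  unfolding quantum_channel_def quantum_operation_def
proof (intro conjI ballI allI impI)
  fix M assume M: "M \<in> trace_class A"
  show "Psi A B \<Phi> M \<in> trace_class (SB B)" by (rule Psi_tc[where \<Phi>=\<Phi> and M=M, OF qoD(1)[OF qo M]])
  show "trace (SB B) (Psi A B \<Phi> M) = trace A M" by (rule Psi_trace[where \<Phi>=\<Phi> and M=M, OF qoD(1)[OF qo M]])
  fix c :: complex
  show "Psi A B \<Phi> (\<lambda>i j. c * M i j) = (\<lambda>i j. c * Psi A B \<Phi> M i j)" by (rule Psi_scale[OF qo M])
next
  fix M N assume "M \<in> trace_class A" "N \<in> trace_class A"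
  then show "Psi A B \<Phi> (\<lambda>i j. M i j + N i j) = (\<lambda>i j. Psi A B \<Phi> M i j + Psi A B \<Phi> N i j)"
    by (rule Psi_add[OF qo])
next
  fix n :: nat and W assume "positive_tc (A \<times> {..<n}) W"
  then show "positive_tc (SB B \<times> {..<n}) (ampl n (Psi A B \<Phi>) W)" by (rule Psi_CP[OF qo])
next
  fix M assume "positive_tc A M"
  then have M: "M \<in> trace_class A" by (simp add: positive_tc_def)
  show "Re (trace (SB B) (Psi A B \<Phi> M)) \<le> Re (trace A M)"
    using Psi_trace[where \<Phi>=\<Phi> and M=M, OF qoD(1)[OF qo M]] by simp
qed

theorem lemma2:
  fixes A :: "'a set" and B :: "'b set"
    and \<Phi> :: "nat \<Rightarrow> ('a \<Rightarrow> 'a \<Rightarrow> complex) \<Rightarrow> ('b \<Rightarrow> 'b \<Rightarrow> complex)"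
  assumes "countable A" and "countable B"
    and "\<forall>n. quantum_operation A B (\<Phi> n)"
  shows "strongly_converges A B (\<lambda>n. \<Phi> (Suc n)) (\<Phi> 0) \<longleftrightarrow>
    (\<exists>C :: nat set. \<exists>\<Psi> :: nat \<Rightarrow> ('a \<Rightarrow> 'a \<Rightarrow> complex) \<Rightarrow> ('b + nat \<Rightarrow> 'b + nat \<Rightarrow> complex).
       (\<forall>n. quantum_channel A (Inl ` B \<union> Inr ` C) (\<Psi> n))
     \<and> strongly_converges A (Inl ` B \<union> Inr ` C) (\<lambda>n. \<Psi> (Suc n)) (\<Psi> 0)
     \<and> (\<forall>n. \<forall>\<rho> \<in> trace_class A. \<Phi> n \<rho> = (\<lambda>i j. \<Psi> n \<rho> (Inl i) (Inl j))))"
proof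
  have qo: "\<And>n. quantum_operation A B (\<Phi> n)" using assms(3) by blast
  assume sc: "strongly_converges A B (\<lambda>n. \<Phi> (Suc n)) (\<Phi> 0)"
  define \<Psi> where "\<Psi> = (\<lambda>n. Psi A B (\<Phi> n))"
  have ch: "quantum_channel A (Inl ` B \<union> Inr ` {0}) (\<Psi> n)" for n
    using Psi_channel[OF qo] by (simp add: \<Psi>_def SB_def)
  have conv: "strongly_converges A (Inl ` B \<union> Inr ` {0}) (\<lambda>n. \<Psi> (Suc n)) (\<Psi> 0)"
    unfolding strongly_converges_def
  proof
    fix \<rho> assume \<rho>: "\<rho> \<in> density_ops A"
    have r: "\<rho> \<in> trace_class A" by (rule density_tc[OF \<rho>])
    have lim: "(\<lambda>n. trace_norm B (\<lambda>i j. \<Phi> (Suc n) \<rho> i j - \<Phi> 0 \<rho> i j)) \<longlonglongrightarrow> 0"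
      using sc \<rho> by (simp add: strongly_converges_def)
    have lim2: "(\<lambda>n. 2 * trace_norm B (\<lambda>i j. \<Phi> (Suc n) \<rho> i j - \<Phi> 0 \<rho> i j)) \<longlonglongrightarrow> 0"
      using tendsto_mult_right_zero[OF lim, of 2] by simp
    have tcm: "\<Psi> m \<rho> \<in> trace_class (Inl ` B \<union> Inr ` {0})" for m
      unfolding \<Psi>_def SB_def[symmetric] by (rule Psi_tc[where \<Phi>="\<Phi> m" and M=\<rho>, OF qoD(1)[OF qo r]])
    have nn: "0 \<le> trace_norm (Inl ` B \<union> Inr ` {0}) (\<lambda>i j. \<Psi> (Suc n) \<rho> i j - \<Psi> 0 \<rho> i j)" for n
      by (rule tn_nonneg[OF tc_diff[OF tcm tcm]])
    have bd: "trace_norm (Inl ` B \<union> Inr ` {0}) (\<lambda>i j. \<Psi> (Suc n) \<rho> i j - \<Psi> 0 \<rho> i j)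
          \<le> 2 * trace_norm B (\<lambda>i j. \<Phi> (Suc n) \<rho> i j - \<Phi> 0 \<rho> i j)" for n
      unfolding \<Psi>_def SB_def[symmetric] by (rule Psi_conv[OF qo qo r])
    show "(\<lambda>n. trace_norm (Inl ` B \<union> Inr ` {0}) (\<lambda>i j. \<Psi> (Suc n) \<rho> i j - \<Psi> 0 \<rho> i j)) \<longlonglongrightarrow> 0"
      by (rule tendsto_sandwich[OF always_eventually always_eventually tendsto_const lim2]) (intro allI nn bd)+
  qed
  have comp: "\<Phi> n \<rho> = (\<lambda>i j. \<Psi> n \<rho> (Inl i) (Inl j))" for n \<rho>
    by (simp add: \<Psi>_def Psi_def)
  show "\<exists>C :: nat set. \<exists>\<Psi> :: nat \<Rightarrow> ('a \<Rightarrow> 'a \<Rightarrow> complex) \<Rightarrow> ('b + nat \<Rightarrow> 'b + nat \<Rightarrow> complex).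
       (\<forall>n. quantum_channel A (Inl ` B \<union> Inr ` C) (\<Psi> n))
     \<and> strongly_converges A (Inl ` B \<union> Inr ` C) (\<lambda>n. \<Psi> (Suc n)) (\<Psi> 0)
     \<and> (\<forall>n. \<forall>\<rho> \<in> trace_class A. \<Phi> n \<rho> = (\<lambda>i j. \<Psi> n \<rho> (Inl i) (Inl j)))"
    using ch conv comp by blast
next
  assume "\<exists>C :: nat set. \<exists>\<Psi> :: nat \<Rightarrow> ('a \<Rightarrow> 'a \<Rightarrow> complex) \<Rightarrow> ('b + nat \<Rightarrow> 'b + nat \<Rightarrow> complex).
       (\<forall>n. quantum_channel A (Inl ` B \<union> Inr ` C) (\<Psi> n))
     \<and> strongly_converges A (Inl ` B \<union> Inr ` C) (\<lambda>n. \<Psi> (Suc n)) (\<Psi> 0)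
     \<and> (\<forall>n. \<forall>\<rho> \<in> trace_class A. \<Phi> n \<rho> = (\<lambda>i j. \<Psi> n \<rho> (Inl i) (Inl j)))"
  then obtain C :: "nat set" and \<Psi> :: "nat \<Rightarrow> ('a \<Rightarrow> 'a \<Rightarrow> complex) \<Rightarrow> ('b + nat \<Rightarrow> 'b + nat \<Rightarrow> complex)"
    where ch: "\<And>n. quantum_channel A (Inl ` B \<union> Inr ` C) (\<Psi> n)"
      and conv: "strongly_converges A (Inl ` B \<union> Inr ` C) (\<lambda>n. \<Psi> (Suc n)) (\<Psi> 0)"
      and comp: "\<And>n \<rho>. \<rho> \<in> trace_class A \<Longrightarrow> \<Phi> n \<rho> = (\<lambda>i j. \<Psi> n \<rho> (Inl i) (Inl j))"
    by blast
  have qoP: "quantum_operation A (Inl ` B \<union> Inr ` C) (\<Psi> n)" for n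
    using ch by (simp add: quantum_channel_def)
  show "strongly_converges A B (\<lambda>n. \<Phi> (Suc n)) (\<Phi> 0)"
    unfolding strongly_converges_def
  proof
    fix \<rho> assume \<rho>: "\<rho> \<in> density_ops A"
    have r: "\<rho> \<in> trace_class A" by (rule density_tc[OF \<rho>])
    define D where "D = (\<lambda>n i j. \<Psi> (Suc n) \<rho> i j - \<Psi> 0 \<rho> i j)"
    have D: "D n \<in> trace_class (Inl ` B \<union> Inr ` C)" for n
      unfolding D_def by (rule tc_diff[OF qoD(1)[OF qoP r] qoD(1)[OF qoP r]])
    have e: "(\<lambda>i j. \<Phi> (Suc n) \<rho> i j - \<Phi> 0 \<rho> i j) = (\<lambda>i j. D n (Inl i) (Inl j))" for n
      by (simp add: comp[OF r] D_def)
    have lim: "(\<lambda>n. trace_norm (Inl ` B \<union> Inr ` C) (D n)) \<longlonglongrightarrow> 0"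
      using conv \<rho> by (simp add: strongly_converges_def D_def)
    show "(\<lambda>n. trace_norm B (\<lambda>i j. \<Phi> (Suc n) \<rho> i j - \<Phi> 0 \<rho> i j)) \<longlonglongrightarrow> 0"
      unfolding e
    proof (rule tendsto_sandwich[OF _ _ tendsto_const lim])
      show "\<forall>\<^sub>F n in sequentially. 0 \<le> trace_norm B (\<lambda>i j. D n (Inl i) (Inl j))"
        using tn_nonneg[OF restr_tn(1)[OF D]] by simp
      show "\<forall>\<^sub>F n in sequentially. trace_norm B (\<lambda>i j. D n (Inl i) (Inl j)) \<le> trace_norm (Inl ` B \<union> Inr ` C) (D n)"
        using restr_tn(2)[OF D] by simp
    qed
  qed
qed


end
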